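(* Let $\lambda_2$ be the second smallest eigenvalue of the Laplacian of $G$. For every state $x$ and every round $k\ge 0$, \[ \mathbb{E}\big[\Psi_0(X^k)-\Psi_0(X^{k+1}) \,\big|\, X^k=x\big] \;\ge\; \frac{\lambda_2}{16\Delta}\cdot\frac{1}{s_{\max}^2}\cdot \Psi_0(x) \;-\; \frac{n}{4 s_{\max}}. \]
   Context: $G=(V,E)$ is an undirected graph on $n$ vertices (processors) with maximum degree $\Delta$; $\deg(i)$ is the degree and $d_{ij}=\max\{\deg(i),\deg(j)\}$. Its Laplacian $L$ has $L_{ii}=\deg(i)$, $L_{ij}=-1$ if $\{i,j\}\in E$, $0$ otherwise. Processor $i$ has speed $s_i>0$, scaled so the smallest speed is $1$; $s_{\max}=\max_i s_i$, $\mathcal{S}=\sum_i s_i$. There are $m$ unit tasks; in state $x$, $w_i(x)$ is the number of tasks on $i$ and $\ell_i(x)=w_i(x)/s_i$. $\Psi_0(x)=\sum_i (w_i(x)-m s_i/\mathcal{S})^2/s_i$. Protocol with $\alpha=4s_{\max}$: in each round every task, independently, with $i$ its current processor, chooses a uniformly random neighbor $j$; if $\ell_i-\ell_j>1/s_j$ it moves to $j$ with probability $\frac{\deg(i)}{d_{ij}}\cdot\frac{\ell_i-\ell_j}{\alpha(1/s_i+1/s_j)w_i}$, otherwise stays. $X^k$ denotes the state after $k$ rounds. *)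

theory Defs
  imports "Jordan_Normal_Form.Char_Poly" "HOL-Probability.Probability_Mass_Function"
begin

(* Graph on vertices {0..<n}, adjacency relation E (assumed symmetric, irreflexive). *)
definition nbrs :: "nat \<Rightarrow> (nat \<Rightarrow> nat \<Rightarrow> bool) \<Rightarrow> nat \<Rightarrow> nat set" where
  "nbrs n E i = {j. j < n \<and> E i j}"

definition deg :: "nat \<Rightarrow> (nat \<Rightarrow> nat \<Rightarrow> bool) \<Rightarrow> nat \<Rightarrow> nat" where
  "deg n E i = card (nbrs n E i)"

definition max_deg :: "nat \<Rightarrow> (nat \<Rightarrow> nat \<Rightarrow> bool) \<Rightarrow> nat" where
  "max_deg n E = Max (deg n E ` {0..<n})"

definition laplacian :: "nat \<Rightarrow> (nat \<Rightarrow> nat \<Rightarrow> bool) \<Rightarrow> real Matrix.mat" where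
  "laplacian n E = Matrix.mat n n (\<lambda>(i,j). if i = j then real (deg n E i)
                                      else if E i j then -1 else 0)"

(* eigenvalues of L, with multiplicity, in increasing order
   (L is real symmetric, so its characteristic polynomial splits over the reals) *)
definition lap_eigenvalues :: "nat \<Rightarrow> (nat \<Rightarrow> nat \<Rightarrow> bool) \<Rightarrow> real list" where
  "lap_eigenvalues n E = sorted_list_of_multiset (proots (char_poly (laplacian n E)))"

definition lambda2 :: "nat \<Rightarrow> (nat \<Rightarrow> nat \<Rightarrow> bool) \<Rightarrow> real" where
  "lambda2 n E = lap_eigenvalues n E ! 1"

definition smax :: "nat \<Rightarrow> (nat \<Rightarrow> real) \<Rightarrow> real" where
  "smax n s = Max (s ` {0..<n})"

definition Stot :: "nat \<Rightarrow> (nat \<Rightarrow> real) \<Rightarrow> real" where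
  "Stot n s = (\<Sum>i<n. s i)"

(* A state is the load vector w :: nat \<Rightarrow> nat (w i = number of tasks on processor i). *)
definition load :: "(nat \<Rightarrow> real) \<Rightarrow> (nat \<Rightarrow> nat) \<Rightarrow> nat \<Rightarrow> real" where
  "load s w i = real (w i) / s i"

(* Potential Psi_0, m = total number of tasks *)
definition Psi0 :: "nat \<Rightarrow> (nat \<Rightarrow> real) \<Rightarrow> nat \<Rightarrow> (nat \<Rightarrow> nat) \<Rightarrow> real" where
  "Psi0 n s m w = (\<Sum>i<n. (real (w i) - real m * s i / Stot n s)\<^sup>2 / s i)"

definition move_prob :: "nat \<Rightarrow> (nat \<Rightarrow> nat \<Rightarrow> bool) \<Rightarrow> (nat \<Rightarrow> real) \<Rightarrow> (nat \<Rightarrow> nat)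
                         \<Rightarrow> nat \<Rightarrow> nat \<Rightarrow> real" where
  "move_prob n E s w i j =
     (let \<alpha> = 4 * smax n s;
          dij = real (max (deg n E i) (deg n E j))
      in if load s w i - load s w j > 1 / s j
         then real (deg n E i) / dij * (load s w i - load s w j)
                / (\<alpha> * (1 / s i + 1 / s j) * real (w i))
         else 0)"

definition task_step :: "nat \<Rightarrow> (nat \<Rightarrow> nat \<Rightarrow> bool) \<Rightarrow> (nat \<Rightarrow> real) \<Rightarrow> (nat \<Rightarrow> nat)
                         \<Rightarrow> nat \<Rightarrow> nat pmf" where
  "task_step n E s w i =
     (if nbrs n E i = {} then return_pmf i
      else do { j \<leftarrow> pmf_of_set (nbrs n E i);
                b \<leftarrow> bernoulli_pmf (move_prob n E s w i j);
                return_pmf (if b then j else i) })"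

fun sample_all :: "(nat \<Rightarrow> nat pmf) \<Rightarrow> nat list \<Rightarrow> nat list pmf" where
  "sample_all f [] = return_pmf []"
| "sample_all f (a # as) = do { b \<leftarrow> f a; bs \<leftarrow> sample_all f as; return_pmf (b # bs) }"

definition task_origins :: "nat \<Rightarrow> (nat \<Rightarrow> nat) \<Rightarrow> nat list" where
  "task_origins n w = concat (map (\<lambda>i. replicate (w i) i) [0..<n])"

definition round_step :: "nat \<Rightarrow> (nat \<Rightarrow> nat \<Rightarrow> bool) \<Rightarrow> (nat \<Rightarrow> real) \<Rightarrow> (nat \<Rightarrow> nat)
                          \<Rightarrow> (nat \<Rightarrow> nat) pmf" where
  "round_step n E s w =
     map_pmf (\<lambda>ds j. count_list ds j) (sample_all (task_step n E s w) (task_origins n w))"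

end

theory Submission
  imports Defs "HOL-Analysis.Analysis"
begin


lemma exp_bind_fin:
  fixes h :: "'b \<Rightarrow> real"
  assumes M: "finite (set_pmf M)" and N: "\<And>x. x \<in> set_pmf M \<Longrightarrow> finite (set_pmf (N x))"
  shows "measure_pmf.expectation (bind_pmf M N) h
       = measure_pmf.expectation M (\<lambda>x. measure_pmf.expectation (N x) h)"
proof -
  define B where "B = (\<Union>x\<in>set_pmf M. set_pmf (N x))"
  have B: "finite B" using M N by (auto simp: B_def)
  have pb: "pmf (bind_pmf M N) y = (\<Sum>x\<in>set_pmf M. pmf M x * pmf (N x) y)" for y
    unfolding pmf_bind by (subst integral_measure_pmf[OF M]) auto
  have "measure_pmf.expectation (bind_pmf M N) h = (\<Sum>y\<in>B. pmf (bind_pmf M N) y * h y)"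
    by (subst integral_measure_pmf[OF B]) (auto simp: B_def)
  also have "\<dots> = (\<Sum>y\<in>B. \<Sum>x\<in>set_pmf M. pmf M x * pmf (N x) y * h y)"
    by (simp add: pb sum_distrib_right)
  also have "\<dots> = (\<Sum>x\<in>set_pmf M. pmf M x * (\<Sum>y\<in>B. pmf (N x) y * h y))"
    by (subst sum.swap) (simp add: sum_distrib_left mult.assoc)
  also have "\<dots> = (\<Sum>x\<in>set_pmf M. pmf M x * measure_pmf.expectation (N x) h)"
  proof (rule sum.cong[OF refl])
    fix x assume x: "x \<in> set_pmf M"
    have "measure_pmf.expectation (N x) h = (\<Sum>y\<in>B. pmf (N x) y * h y)"
      by (subst integral_measure_pmf[OF B]) (use x in \<open>auto simp: B_def\<close>)
    then show "pmf M x * (\<Sum>y\<in>B. pmf (N x) y * h y) = pmf M x * measure_pmf.expectation (N x) h" by simp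
  qed
  also have "\<dots> = measure_pmf.expectation M (\<lambda>x. measure_pmf.expectation (N x) h)"
    by (subst integral_measure_pmf[OF M]) auto
  finally show ?thesis .
qed


lemma exp_indicator_pmf: "measure_pmf.expectation M (\<lambda>b. if b = j then 1 else (0::real)) = pmf M j"
  by (subst integral_measure_pmf[of "{j}"]) (auto split: if_splits)

lemma exp_add_fin: "finite (set_pmf M) \<Longrightarrow>
  measure_pmf.expectation M (\<lambda>x. a x + b x) = measure_pmf.expectation M a + measure_pmf.expectation M (b :: _ \<Rightarrow> real)"
  by (rule Bochner_Integration.integral_add) (auto simp: integrable_measure_pmf_finite)

lemma sample_all_fin:
  assumes "\<And>a. a \<in> set as \<Longrightarrow> finite (set_pmf (f a))"
  shows "finite (set_pmf (sample_all f as))"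
  using assms by (induction as) auto

lemma sample_all_E1:
  assumes fin: "\<And>a. a \<in> set as \<Longrightarrow> finite (set_pmf (f a))"
  shows "measure_pmf.expectation (sample_all f as) (\<lambda>ds. real (count_list ds j))
       = (\<Sum>a\<leftarrow>as. pmf (f a) j)"
  using fin
proof (induction as)
  case Nil then show ?case by simp
next
  case (Cons a as)
  have fa: "finite (set_pmf (f a))" using Cons by auto
  have fs: "finite (set_pmf (sample_all f as))" using Cons by (intro sample_all_fin) auto
  let ?S = "sample_all f as"
  have "measure_pmf.expectation (sample_all f (a#as)) (\<lambda>ds. real (count_list ds j))
      = measure_pmf.expectation (f a) (\<lambda>b. measure_pmf.expectation ?S
          (\<lambda>bs. (if b = j then 1 else 0) + real (count_list bs j)))"
    by (simp add: exp_bind_fin fa fs, intro Bochner_Integration.integral_cong refl, auto)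
  also have "\<dots> = measure_pmf.expectation (f a) (\<lambda>b. (if b = j then 1 else 0) + (\<Sum>a\<leftarrow>as. pmf (f a) j))"
    by (intro Bochner_Integration.integral_cong refl) (simp add: exp_add_fin fs Cons)
  also have "\<dots> = pmf (f a) j + (\<Sum>a\<leftarrow>as. pmf (f a) j)"
    by (simp add: exp_add_fin fa exp_indicator_pmf)
  finally show ?case by simp
qed

lemma sample_all_E2:
  assumes fin: "\<And>a. a \<in> set as \<Longrightarrow> finite (set_pmf (f a))"
  shows "measure_pmf.expectation (sample_all f as) (\<lambda>ds. (real (count_list ds j))\<^sup>2)
       = (\<Sum>a\<leftarrow>as. pmf (f a) j)\<^sup>2 + (\<Sum>a\<leftarrow>as. pmf (f a) j * (1 - pmf (f a) j))"
  using fin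
proof (induction as)
  case Nil then show ?case by simp
next
  case (Cons a as)
  have fa: "finite (set_pmf (f a))" using Cons by auto
  have fs: "finite (set_pmf (sample_all f as))" using Cons by (intro sample_all_fin) auto
  let ?S = "sample_all f as"
  let ?mu = "(\<Sum>a\<leftarrow>as. pmf (f a) j)"
  let ?V = "(\<Sum>a\<leftarrow>as. pmf (f a) j * (1 - pmf (f a) j))"
  let ?p = "pmf (f a) j"
  have E1: "measure_pmf.expectation ?S (\<lambda>ds. real (count_list ds j)) = ?mu"
    using sample_all_E1[of as f j] Cons by auto
  have "measure_pmf.expectation (sample_all f (a#as)) (\<lambda>ds. (real (count_list ds j))\<^sup>2)
      = measure_pmf.expectation (f a) (\<lambda>b. measure_pmf.expectation ?S
          (\<lambda>bs. ((if b = j then 1 else 0) + real (count_list bs j))\<^sup>2))"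
    by (simp add: exp_bind_fin fa fs, intro Bochner_Integration.integral_cong refl, auto)
  also have "\<dots> = measure_pmf.expectation (f a) (\<lambda>b. measure_pmf.expectation ?S
          (\<lambda>bs. (if b = j then 1 else 0) + (2 * (if b = j then 1 else 0)) * real (count_list bs j)
                 + (real (count_list bs j))\<^sup>2))"
    by (intro Bochner_Integration.integral_cong refl) (auto simp: power2_eq_square algebra_simps)
  also have "\<dots> = measure_pmf.expectation (f a) (\<lambda>b. (if b = j then 1 else 0) + (2 * (if b = j then 1 else 0)) * ?mu
                 + (?mu\<^sup>2 + ?V))"
    apply (intro Bochner_Integration.integral_cong refl)
    using Cons E1 by (simp add: exp_add_fin fs)
  also have "\<dots> = ?p + 2 * ?p * ?mu + (?mu\<^sup>2 + ?V)"
    by (simp add: exp_add_fin fa exp_indicator_pmf)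
  finally show ?case by (simp add: power2_eq_square algebra_simps)
qed


definition ip :: "nat \<Rightarrow> (nat \<Rightarrow> real) \<Rightarrow> (nat \<Rightarrow> real) \<Rightarrow> real" where
  "ip n x y = (\<Sum>i<n. x i * y i)"

definition mv :: "nat \<Rightarrow> (nat \<Rightarrow> nat \<Rightarrow> real) \<Rightarrow> (nat \<Rightarrow> real) \<Rightarrow> nat \<Rightarrow> real" where
  "mv n a x i = (if i < n then (\<Sum>j<n. a i j * x j) else 0)"

definition supp :: "nat \<Rightarrow> (nat \<Rightarrow> real) \<Rightarrow> bool" where
  "supp n x = (\<forall>i\<ge>n. x i = 0)"

lemma ip_sym: "ip n x y = ip n y x"
  unfolding ip_def by (simp add: mult.commute)

lemma ip_add_left: "ip n (\<lambda>i. x i + y i) z = ip n x z + ip n y z"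
  unfolding ip_def by (simp add: algebra_simps sum.distrib)

lemma ip_scale_left: "ip n (\<lambda>i. c * x i) z = c * ip n x z"
  unfolding ip_def by (simp add: algebra_simps sum_distrib_left)

lemma ip_self_nonneg: "ip n x x \<ge> 0"
  unfolding ip_def by (intro sum_nonneg) auto

lemma ip_self_zero: "ip n x x = 0 \<Longrightarrow> i < n \<Longrightarrow> x i = 0"
  unfolding ip_def by (subst (asm) sum_nonneg_eq_0_iff) auto

lemma mv_sym:
  assumes sym: "\<And>i j. i < n \<Longrightarrow> j < n \<Longrightarrow> a i j = a j i"
  shows "ip n (mv n a x) y = ip n x (mv n a y)"
proof -
  have "ip n (mv n a x) y = (\<Sum>i<n. \<Sum>j<n. a i j * x j * y i)"
    unfolding ip_def mv_def by (simp add: sum_distrib_right)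
  also have "\<dots> = (\<Sum>j<n. \<Sum>i<n. a i j * x j * y i)" by (rule sum.swap)
  also have "\<dots> = ip n x (mv n a y)"
    unfolding ip_def mv_def by (auto simp: sum_distrib_left intro!: sum.cong simp: sym algebra_simps)
  finally show ?thesis .
qed

lemma mv_add: "mv n a (\<lambda>i. x i + y i) = (\<lambda>i. mv n a x i + mv n a y i)"
  unfolding mv_def by (auto simp: algebra_simps sum.distrib)

lemma mv_scale: "mv n a (\<lambda>i. c * x i) = (\<lambda>i. c * mv n a x i)"
  unfolding mv_def by (auto simp: algebra_simps sum_distrib_left)

definition orthonormal :: "nat \<Rightarrow> nat \<Rightarrow> (nat \<Rightarrow> nat \<Rightarrow> real) \<Rightarrow> bool" where
  "orthonormal n k u = (\<forall>l<k. \<forall>l'<k. ip n (u l) (u l') = (if l = l' then 1 else 0))"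

lemma exists_orth:
  assumes kn: "k < n" and on: "orthonormal n k u"
  shows "\<exists>v. supp n v \<and> ip n v v = 1 \<and> (\<forall>l<k. ip n v (u l) = 0)"
proof -
  define p where "p j = (\<lambda>i. if i < n then (if i = j then 1 else 0) - (\<Sum>l<k. u l j * u l i) else 0)" for j
  have po: "ip n (p j) (u m) = 0" if "j < n" "m < k" for j m
  proof -
    have "ip n (p j) (u m) = (\<Sum>i<n. ((if i = j then 1 else 0) - (\<Sum>l<k. u l j * u l i)) * u m i)"
      unfolding ip_def p_def by (intro sum.cong) auto
    also have "\<dots> = (\<Sum>i<n. (if i = j then u m i else 0)) - (\<Sum>i<n. (\<Sum>l<k. u l j * u l i) * u m i)"
      by (subst sum_subtractf[symmetric], intro sum.cong) (auto simp: left_diff_distrib)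
    also have "(\<Sum>i<n. (if i = j then u m i else 0)) = u m j" using that by simp
    also have "(\<Sum>i<n. (\<Sum>l<k. u l j * u l i) * u m i) = (\<Sum>l<k. u l j * ip n (u l) (u m))"
      unfolding ip_def by (simp add: sum_distrib_right sum_distrib_left mult.assoc sum.swap[of _ "{..<n}"])
    also have "(\<Sum>l<k. u l j * ip n (u l) (u m)) = (\<Sum>l<k. if l = m then u l j else 0)"
      using on that unfolding orthonormal_def by (intro sum.cong) auto
    also have "\<dots> = u m j" using that by simp
    finally show ?thesis by simp
  qed
  have "\<exists>j<n. ip n (p j) (p j) \<noteq> 0"
  proof (rule ccontr)
    assume "\<not> ?thesis"
    then have z: "p j i = 0" if "j < n" "i < n" for i j using ip_self_zero that by blast
    have "(\<Sum>l<k. u l j * u l j) = 1" if "j < n" for j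
      using z[OF that that] that unfolding p_def by simp
    then have "(\<Sum>j<n. \<Sum>l<k. u l j * u l j) = real n" by simp
    also have "(\<Sum>j<n. \<Sum>l<k. u l j * u l j) = (\<Sum>l<k. ip n (u l) (u l))"
      unfolding ip_def by (rule sum.swap)
    also have "\<dots> = real k" using on unfolding orthonormal_def by simp
    finally show False using kn by simp
  qed
  then obtain j where j: "j < n" "ip n (p j) (p j) \<noteq> 0" by blast
  define c where "c = 1 / sqrt (ip n (p j) (p j))"
  have pos: "ip n (p j) (p j) > 0" using j ip_self_nonneg[of n "p j"] by linarith
  define v where "v = (\<lambda>i. c * p j i)"
  have "supp n v" unfolding supp_def v_def p_def by auto
  moreover have "ip n v v = c * c * ip n (p j) (p j)"
    unfolding v_def ip_scale_left by (subst ip_sym, simp add: ip_scale_left)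
  then have "ip n v v = 1" using pos unfolding c_def by (simp add: field_simps)
  moreover have "\<forall>l<k. ip n v (u l) = 0" unfolding v_def ip_scale_left using po j by simp
  ultimately show ?thesis by blast
qed


lemma cont_coord: "continuous_on A (\<lambda>v::nat\<Rightarrow>real. v i)"
  by (rule continuous_on_subset[OF continuous_on_product_coordinates]) simp

lemma ip_mv_expand: "ip n v (mv n a v) = (\<Sum>i<n. \<Sum>j<n. a i j * v j * v i)"
  unfolding ip_def mv_def by (intro sum.cong refl) (simp add: sum_distrib_left mult_ac)

lemma box_compact: "compact (PiE UNIV (\<lambda>i. if i < n then {-1..1} else {0::real}))"
proof -
  have "compactin (product_topology (\<lambda>i. euclidean) UNIV) (PiE UNIV (\<lambda>i. if i < n then {-1..1} else {0::real}))"
    by (subst compactin_PiE) simp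
  then show ?thesis by (simp add: euclidean_product_topology)
qed

lemma cont_ip: "continuous_on A (\<lambda>v::nat\<Rightarrow>real. ip n v (w v))" if "\<And>i. continuous_on A (\<lambda>v. w v i)"
  unfolding ip_def by (intro continuous_on_sum continuous_on_mult cont_coord that)

lemma closed_C: "closed ({v::nat\<Rightarrow>real. ip n v v = 1} \<inter> (\<Inter>l\<in>{..<k}. {v. ip n v (u l) = 0}))"
  by (intro closed_Int closed_INT closed_Collect_eq cont_ip cont_coord continuous_on_const ballI)

lemma cont_Q: "continuous_on A (\<lambda>v. ip n v (mv n a v))"
  unfolding ip_mv_expand by (intro continuous_on_sum continuous_on_mult cont_coord continuous_on_const)

lemma sphere_bound:
  assumes "ip n v v = 1" "i < n" shows "\<bar>v i\<bar> \<le> 1"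
proof -
  have "v i * v i \<le> (\<Sum>i<n. v i * v i)"
    using assms by (intro member_le_sum) auto
  then have "(v i)\<^sup>2 \<le> 1\<^sup>2" using assms unfolding ip_def by (simp add: power2_eq_square)
  then show ?thesis using abs_le_square_iff[of "v i" 1] by simp
qed

lemma S_char:
  "{v. supp n v \<and> ip n v v = 1 \<and> (\<forall>l<k. ip n v (u l) = 0)} =
   PiE UNIV (\<lambda>i. if i < n then {-1..1} else {0::real}) \<inter>
   ({v::nat\<Rightarrow>real. ip n v v = 1} \<inter> (\<Inter>l\<in>{..<k}. {v. ip n v (u l) = 0}))"
  (is "?S = PiE UNIV ?B \<inter> ?C")
proof (intro equalityI subsetI)
  fix v assume v: "v \<in> ?S"
  have "v i \<in> ?B i" for i
  proof (cases "i < n")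
    case True then show ?thesis using sphere_bound[of n v i] v by (simp add: abs_le_iff)
  next
    case False then show ?thesis using v unfolding supp_def by simp
  qed
  then have "v \<in> PiE UNIV ?B" by (simp add: PiE_UNIV_domain)
  moreover have "v \<in> ?C" using v by simp
  ultimately show "v \<in> PiE UNIV ?B \<inter> ?C" by blast
next
  fix v assume v: "v \<in> PiE UNIV ?B \<inter> ?C"
  have "v i = 0" if "\<not> i < n" for i
  proof -
    have "v i \<in> ?B i" using v by (simp add: PiE_UNIV_domain Pi_iff)
    then show ?thesis using that by simp
  qed
  then show "v \<in> ?S" using v unfolding supp_def by auto
qed

lemma exists_min:
  assumes kn: "k < n" and on: "orthonormal n k u"
  shows "\<exists>v. supp n v \<and> ip n v v = 1 \<and> (\<forall>l<k. ip n v (u l) = 0) \<and>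
     (\<forall>w. supp n w \<and> ip n w w = 1 \<and> (\<forall>l<k. ip n w (u l) = 0) \<longrightarrow> ip n v (mv n a v) \<le> ip n w (mv n a w))"
proof -
  define S where "S = {v. supp n v \<and> ip n v v = 1 \<and> (\<forall>l<k. ip n v (u l) = 0)}"
  have cS: "compact S" unfolding S_def S_char
    by (rule compact_Int_closed[OF box_compact closed_C])
  have "S \<noteq> {}" using exists_orth[OF kn on] unfolding S_def by auto
  from continuous_attains_inf[OF cS this cont_Q]
  obtain v where "v \<in> S" "\<And>w. w \<in> S \<Longrightarrow> ip n v (mv n a v) \<le> ip n w (mv n a w)"
    by metis
  then show ?thesis unfolding S_def by auto
qed

lemma ip_add_right: "ip n z (\<lambda>i. x i + y i) = ip n z x + ip n z y"
  using ip_add_left[of n x y z] ip_sym by metis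

lemma ip_scale_right: "ip n z (\<lambda>i. c * x i) = c * ip n z x"
  using ip_scale_left[of n c x z] ip_sym by metis

lemma quad_zero:
  fixes b d :: real
  assumes "\<And>t. 2 * t * b + t\<^sup>2 * d \<ge> 0"
  shows "b = 0"
proof -
  define t where "t = - b / (\<bar>d\<bar> + 1)"
  have pos: "\<bar>d\<bar> + 1 > 0" by simp
  have "0 \<le> (2 * t * b + t\<^sup>2 * d) * (\<bar>d\<bar> + 1)\<^sup>2" using assms[of t] by simp
  also have "\<dots> = 2 * b * (t * (\<bar>d\<bar> + 1)) * (\<bar>d\<bar> + 1) + (t * (\<bar>d\<bar> + 1))\<^sup>2 * d"
    by (simp add: power2_eq_square algebra_simps)
  also have "t * (\<bar>d\<bar> + 1) = - b" unfolding t_def using pos by simp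
  also have "2 * b * (- b) * (\<bar>d\<bar> + 1) + (- b)\<^sup>2 * d = b\<^sup>2 * (d - 2 * \<bar>d\<bar> - 2)"
    by (simp add: power2_eq_square algebra_simps)
  finally have "0 \<le> b\<^sup>2 * (d - 2 * \<bar>d\<bar> - 2)" .
  moreover have "d - 2 * \<bar>d\<bar> - 2 < 0" by (simp add: abs_if)
  ultimately have "b\<^sup>2 \<le> 0" by (simp add: mult_le_0_iff zero_le_mult_iff)
  then show ?thesis by simp
qed

lemma Q_zero: assumes "ip n w w = 0" shows "ip n w (mv n a w) = 0"
proof -
  have "w i = 0" if "i < n" for i using ip_self_zero[OF assms that] .
  then show ?thesis unfolding ip_def by simp
qed

lemma exists_eig:
  assumes sym: "\<And>i j. i < n \<Longrightarrow> j < n \<Longrightarrow> a i j = a j i"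
    and kn: "k < n" and on: "orthonormal n k u"
    and eig: "\<And>l. l < k \<Longrightarrow> mv n a (u l) = (\<lambda>i. \<mu> l * u l i)"
  shows "\<exists>v c. supp n v \<and> ip n v v = 1 \<and> (\<forall>l<k. ip n v (u l) = 0) \<and> mv n a v = (\<lambda>i. c * v i)"
proof -
  obtain v where v: "supp n v" "ip n v v = 1" "\<forall>l<k. ip n v (u l) = 0"
    and vmin: "\<And>w. supp n w \<Longrightarrow> ip n w w = 1 \<Longrightarrow> (\<forall>l<k. ip n w (u l) = 0) \<Longrightarrow> ip n v (mv n a v) \<le> ip n w (mv n a w)"
    using exists_min[OF kn on, of a] by blast
  define c where "c = ip n v (mv n a v)"
  have geq: "ip n w (mv n a w) \<ge> c * ip n w w" if w: "\<forall>l<k. ip n w (u l) = 0" "supp n w" for w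
  proof (cases "ip n w w = 0")
    case True then show ?thesis using Q_zero by simp
  next
    case False
    then have pos: "ip n w w > 0" using ip_self_nonneg[of n w] by linarith
    define r where "r = 1 / sqrt (ip n w w)"
    define w' where "w' = (\<lambda>i. r * w i)"
    have rr: "r * r * ip n w w = 1" unfolding r_def using pos by (simp add: field_simps)
    have "ip n w' w' = r * r * ip n w w" unfolding w'_def ip_scale_left ip_scale_right by simp
    then have "ip n w' w' = 1" using rr by simp
    moreover have "supp n w'" using w unfolding w'_def supp_def by simp
    moreover have "\<forall>l<k. ip n w' (u l) = 0" using w unfolding w'_def ip_scale_left by simp
    ultimately have "c \<le> ip n w' (mv n a w')" using vmin unfolding c_def by blast
    also have "\<dots> = r * r * ip n w (mv n a w)" unfolding w'_def mv_scale ip_scale_left ip_scale_right by simp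
    finally have "c * ip n w w \<le> r * r * ip n w (mv n a w) * ip n w w"
      using pos by (intro mult_right_mono) auto
    also have "\<dots> = ip n w (mv n a w) * (r * r * ip n w w)" by (simp add: algebra_simps)
    finally show ?thesis using rr by simp
  qed
  have claim: "ip n z (mv n a v) = c * ip n z v" if z: "supp n z" "\<forall>l<k. ip n z (u l) = 0" for z
  proof -
    define b where "b = ip n z (mv n a v) - c * ip n z v"
    define d where "d = ip n z (mv n a z) - c * ip n z z"
    have "2 * t * b + t\<^sup>2 * d \<ge> 0" for t
    proof -
      define w where "w = (\<lambda>i. v i + t * z i)"
      have "ip n w (mv n a w) \<ge> c * ip n w w"
        using v z unfolding w_def
        by (intro geq) (auto simp: supp_def ip_add_left ip_scale_left)
      moreover have "ip n w (mv n a w) = c + 2 * t * ip n z (mv n a v) + t\<^sup>2 * ip n z (mv n a z)"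
        unfolding w_def mv_add mv_scale ip_add_left ip_add_right ip_scale_left ip_scale_right c_def
        using mv_sym[OF sym, where x=v and y=z] ip_sym[of n "mv n a v" z]
        by (simp add: power2_eq_square algebra_simps)
      moreover have "ip n w w = 1 + 2 * t * ip n z v + t\<^sup>2 * ip n z z"
        unfolding w_def ip_add_left ip_add_right ip_scale_left ip_scale_right
        using v(2) ip_sym[of n v z] by (simp add: power2_eq_square algebra_simps)
      ultimately show ?thesis unfolding b_def d_def by (simp add: algebra_simps)
    qed
    then have "b = 0" by (rule quad_zero)
    then show ?thesis unfolding b_def by simp
  qed
  define z where "z = (\<lambda>i. mv n a v i + (- c) * v i)"
  have zs: "supp n z" using v(1) unfolding z_def supp_def mv_def by simp
  have zu: "\<forall>l<k. ip n z (u l) = 0"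
  proof (intro allI impI)
    fix l assume l: "l < k"
    have "ip n (mv n a v) (u l) = ip n v (mv n a (u l))" by (rule mv_sym[OF sym])
    also have "\<dots> = \<mu> l * ip n v (u l)" unfolding eig[OF l] ip_scale_right ..
    finally show "ip n z (u l) = 0" unfolding z_def ip_add_left ip_scale_left using v(3) l by simp
  qed
  have "ip n z z = 0"
    using claim[OF zs zu] unfolding z_def ip_add_right ip_scale_right
    by (metis add.right_neutral  add_uminus_conv_diff diff_self ip_add_right mult_minus_left
        ip_scale_right z_def)
  then have "z i = 0" if "i < n" for i using ip_self_zero that by blast
  then have "mv n a v i = c * v i" for i
    using v(1) unfolding z_def supp_def mv_def by (cases "i < n") auto
  then show ?thesis using v by blast
qed


lemma eig_basis:
  assumes sym: "\<And>i j. i < n \<Longrightarrow> j < n \<Longrightarrow> a i j = a j i"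
  shows "k \<le> n \<Longrightarrow> \<exists>u \<mu>. orthonormal n k u \<and> (\<forall>l<k. supp n (u l) \<and> mv n a (u l) = (\<lambda>i. \<mu> l * u l i))"
proof (induction k)
  case 0 then show ?case by (auto simp: orthonormal_def)
next
  case (Suc k)
  then obtain u \<mu> where on: "orthonormal n k u" and e: "\<forall>l<k. supp n (u l) \<and> mv n a (u l) = (\<lambda>i. \<mu> l * u l i)"
    by auto
  from Suc have kn: "k < n" by simp
  obtain v c where v: "supp n v" "ip n v v = 1" "\<forall>l<k. ip n v (u l) = 0" "mv n a v = (\<lambda>i. c * v i)"
    using exists_eig[where a=a and \<mu>=\<mu>, OF sym kn on] e by blast
  define u' where "u' = u(k := v)"
  define \<mu>' where "\<mu>' = \<mu>(k := c)"
  have "orthonormal n (Suc k) u'"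
    unfolding orthonormal_def
  proof (intro allI impI)
    fix l l' assume l: "l < Suc k" "l' < Suc k"
    show "ip n (u' l) (u' l') = (if l = l' then 1 else 0)"
    proof (cases "l = k")
      case True
      then show ?thesis using v l ip_sym[of n v "u l'"] unfolding u'_def by (cases "l' = k") auto
    next
      case False
      then show ?thesis using v l on ip_sym[of n "u l" v] unfolding u'_def orthonormal_def
        by (cases "l' = k") auto
    qed
  qed
  moreover have "\<forall>l<Suc k. supp n (u' l) \<and> mv n a (u' l) = (\<lambda>i. \<mu>' l * u' l i)"
    using e v unfolding u'_def \<mu>'_def by (auto simp: less_Suc_eq)
  ultimately show ?case by blast
qed

lemma mt1: "k < n \<Longrightarrow> l < n \<Longrightarrow> (transpose_mat (Matrix.mat n n (\<lambda>(i,k). u k i)) * Matrix.mat n n (\<lambda>(i,k). u k i)) $$ (k,l) = (\<Sum>i<n. u k i * u l i)"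
  by (simp add: scalar_prod_def atLeast0LessThan)
lemma mt2: "i < n \<Longrightarrow> j < n \<Longrightarrow> (Matrix.mat n n (\<lambda>(i,k). u k i) * transpose_mat (Matrix.mat n n (\<lambda>(i,k). (u k i::real)))) $$ (i,j) = (\<Sum>k<n. u k i * u k j)"
  by (simp add: scalar_prod_def atLeast0LessThan)

lemma parseval:
  assumes on: "orthonormal n n u"
  shows "ip n x z = (\<Sum>k<n. ip n x (u k) * ip n z (u k))"
proof -
  define U where "U = Matrix.mat n n (\<lambda>(i,k). u k i)"
  have U: "U \<in> carrier_mat n n" unfolding U_def by simp
  have "transpose_mat U * U = 1\<^sub>m n"
  proof (rule eq_matI)
    fix k l assume "k < dim_row (1\<^sub>m n)" "l < dim_col (1\<^sub>m n :: real mat)"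
    then have kl: "k < n" "l < n" by auto
    show "(transpose_mat U * U) $$ (k, l) = 1\<^sub>m n $$ (k, l)"
      unfolding U_def mt1[OF kl] using on kl unfolding orthonormal_def ip_def by simp
  qed (auto simp: U_def)
  then have "U * transpose_mat U = 1\<^sub>m n"
    using mat_mult_left_right_inverse[of "transpose_mat U" n U] U by auto
  then have delta: "(\<Sum>k<n. u k i * u k j) = (if i = j then 1 else 0)" if "i < n" "j < n" for i j
    using that arg_cong[OF \<open>U * transpose_mat U = 1\<^sub>m n\<close>, of "\<lambda>M. M $$ (i,j)"]
    unfolding U_def mt2[OF that] by simp
  have "ip n x z = (\<Sum>i<n. \<Sum>j<n. x i * z j * (if i = j then 1 else 0))"
    unfolding ip_def by (simp add: if_distrib cong: if_cong)
  also have "\<dots> = (\<Sum>i<n. \<Sum>j<n. \<Sum>k<n. x i * z j * (u k i * u k j))"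
  proof (intro sum.cong refl)
    fix i j assume "i \<in> {..<n}" "j \<in> {..<n}"
    then show "x i * z j * (if i = j then 1 else 0) = (\<Sum>k<n. x i * z j * (u k i * u k j))"
      by (simp add: delta sum_distrib_left[symmetric])
  qed
  also have "\<dots> = (\<Sum>k<n. (\<Sum>i<n. x i * u k i) * (\<Sum>j<n. z j * u k j))"
  proof -
    have "(\<Sum>i<n. \<Sum>j<n. \<Sum>k<n. x i * z j * (u k i * u k j)) = (\<Sum>i<n. \<Sum>k<n. \<Sum>j<n. x i * z j * (u k i * u k j))"
      by (rule sum.cong[OF refl], rule sum.swap)
    also have "\<dots> = (\<Sum>k<n. \<Sum>i<n. \<Sum>j<n. x i * z j * (u k i * u k j))"
      by (rule sum.swap)
    also have "\<dots> = (\<Sum>k<n. (\<Sum>i<n. x i * u k i) * (\<Sum>j<n. z j * u k j))"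
      by (intro sum.cong refl) (simp add: sum_product mult_ac)
    finally show ?thesis .
  qed
  finally show ?thesis unfolding ip_def .
qed


lemma mt3: "i < n \<Longrightarrow> k < n \<Longrightarrow> A \<in> carrier_mat n n \<Longrightarrow>
   (A * Matrix.mat n n (\<lambda>(i,k). u k i)) $$ (i,k) = (\<Sum>j<n. A $$ (i,j) * u k j)"
  by (simp add: scalar_prod_def atLeast0LessThan)

lemma mt4: "i < n \<Longrightarrow> k < n \<Longrightarrow>
   (Matrix.mat n n (\<lambda>(i,k). u k i) * Matrix.mat n n (\<lambda>(i,j). if i = j then \<mu> i else 0)) $$ (i,k) = u k i * (\<mu> k :: real)"
proof -
  assume a: "i < n" "k < n"
  then have "(Matrix.mat n n (\<lambda>(i,k). u k i) * Matrix.mat n n (\<lambda>(i,j). if i = j then \<mu> i else 0)) $$ (i,k)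
     = (\<Sum>j\<in>{0..<n}. u j i * (if j = k then \<mu> j else 0))"
    by (simp add: scalar_prod_def)
  also have "\<dots> = u k i * \<mu> k" using a by (simp add: if_distrib cong: if_cong)
  finally show ?thesis .
qed

lemma char_poly_diag:
  fixes A :: "real mat"
  assumes A: "A \<in> carrier_mat n n"
    and on: "orthonormal n n u"
    and eig: "\<And>k. k < n \<Longrightarrow> mv n (\<lambda>i j. A $$ (i,j)) (u k) = (\<lambda>i. \<mu> k * u k i)"
  shows "char_poly A = (\<Prod>x\<leftarrow>map \<mu> [0..<n]. [:- x, 1:])"
proof -
  define U where "U = Matrix.mat n n (\<lambda>(i,k). u k i)"
  define D where "D = Matrix.mat n n (\<lambda>(i,j). if i = j then \<mu> i else (0::real))"
  have U: "U \<in> carrier_mat n n" and D: "D \<in> carrier_mat n n" and UT: "transpose_mat U \<in> carrier_mat n n"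
    unfolding U_def D_def by auto
  have "transpose_mat U * U = 1\<^sub>m n"
  proof (rule eq_matI)
    fix k l assume "k < dim_row (1\<^sub>m n)" "l < dim_col (1\<^sub>m n :: real mat)"
    then have kl: "k < n" "l < n" by auto
    show "(transpose_mat U * U) $$ (k, l) = 1\<^sub>m n $$ (k, l)"
      unfolding U_def mt1[OF kl] using on kl unfolding orthonormal_def ip_def by simp
  qed (auto simp: U_def)
  moreover then have UUT: "U * transpose_mat U = 1\<^sub>m n"
    using mat_mult_left_right_inverse[of "transpose_mat U" n U] U by auto
  ultimately have inv: "transpose_mat U * U = 1\<^sub>m n" "U * transpose_mat U = 1\<^sub>m n" by auto
  have AU: "A * U = U * D"
  proof (rule eq_matI)
    fix i k assume "i < dim_row (U * D)" "k < dim_col (U * D)"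
    then have ik: "i < n" "k < n" using U D by auto
    have "(A * U) $$ (i,k) = (\<Sum>j<n. A $$ (i,j) * u k j)" unfolding U_def by (rule mt3[OF ik A])
    also have "\<dots> = mv n (\<lambda>i j. A $$ (i,j)) (u k) i" unfolding mv_def using ik by simp
    also have "\<dots> = \<mu> k * u k i" using eig[OF ik(2)] by simp
    also have "\<dots> = (U * D) $$ (i,k)" unfolding U_def D_def using mt4[OF ik] by simp
    finally show "(A * U) $$ (i,k) = (U * D) $$ (i,k)" .
  qed (use A U D in auto)
  have "A = A * (U * transpose_mat U)" using inv A by simp
  also have "\<dots> = (A * U) * transpose_mat U" using A U UT by (simp add: assoc_mult_mat)
  also have "\<dots> = U * D * transpose_mat U" unfolding AU ..
  finally have "A = U * D * transpose_mat U" .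
  then have "similar_mat_wit A D U (transpose_mat U)"
    unfolding similar_mat_wit_def Let_def using A U D UT inv by auto
  then have "similar_mat A D" unfolding similar_mat_def by blast
  then have "char_poly A = char_poly D" by (rule char_poly_similar)
  also have "\<dots> = (\<Prod>a\<leftarrow>diag_mat D. [:- a, 1:])"
    by (rule char_poly_upper_triangular[OF D]) (auto simp: upper_triangular_def D_def)
  also have "diag_mat D = map \<mu> [0..<n]" unfolding diag_mat_def D_def by auto
  finally show ?thesis .
qed

lemma proots_prod_lin: "proots (\<Prod>x\<leftarrow>xs. [:- x, 1:]) = mset (xs :: real list)"
proof (induction xs)
  case Nil then show ?case by simp
next
  case (Cons a xs)
  have nz: "(\<Prod>x\<leftarrow>xs. [:- x, 1:]) \<noteq> (0 :: real poly)"
    by (auto simp: prod_list_zero_iff)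
  have "(\<Prod>x\<leftarrow>a#xs. [:- x, 1:]) = [:- a, 1:] * (\<Prod>x\<leftarrow>xs. [:- x, 1:])" by simp
  then have "proots (\<Prod>x\<leftarrow>a#xs. [:- x, 1:]) = proots [:- a, 1:] + proots (\<Prod>x\<leftarrow>xs. [:- x, 1:])"
    using nz by (simp only: proots_mult) (subst proots_mult, auto)
  also have "proots [:- a, 1:] = {#a#}" using proots_linear_factor[of "-a"] by simp
  finally show ?case using Cons by simp
qed


lemma sorted_filter_less:
  assumes "sorted l" "length l \<ge> 2"
  shows "length (filter (\<lambda>v. v < l ! 1) l) \<le> 1"
proof -
  obtain a b r where l: "l = a # b # r" using assms(2)
    by (cases l; cases "tl l") auto
  have "\<forall>x\<in>set r. b \<le> x" using assms(1) unfolding l by auto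
  then have "filter (\<lambda>v. v < b) r = []" by (auto simp: filter_empty_conv)
  then show ?thesis unfolding l by simp
qed

lemma card_less_second:
  fixes \<mu> :: "nat \<Rightarrow> real"
  assumes "n \<ge> 2"
  shows "card {k. k < n \<and> \<mu> k < sort (map \<mu> [0..<n]) ! 1} \<le> 1"
proof -
  define xs where "xs = map \<mu> [0..<n]"
  define t where "t = sort xs ! 1"
  have "card {k. k < n \<and> \<mu> k < t} = card {k. k < length xs \<and> xs ! k < t}"
    unfolding xs_def by (intro arg_cong[where f=card]) auto
  also have "\<dots> = length (filter (\<lambda>v. v < t) xs)" by (rule length_filter_conv_card[symmetric])
  also have "\<dots> = length (filter (\<lambda>v. v < t) (sort xs))"
    by (metis mset_filter mset_sort size_mset)
  also have "\<dots> \<le> 1" unfolding t_def using assms by (intro sorted_filter_less) (auto simp: xs_def)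
  finally show ?thesis unfolding t_def xs_def .
qed

definition lapf :: "nat \<Rightarrow> (nat \<Rightarrow> nat \<Rightarrow> bool) \<Rightarrow> nat \<Rightarrow> nat \<Rightarrow> real" where
  "lapf n E i j = laplacian n E $$ (i,j)"

lemma lapf_eq: "i < n \<Longrightarrow> j < n \<Longrightarrow> lapf n E i j = (if i = j then real (deg n E i) else if E i j then -1 else 0)"
  unfolding lapf_def laplacian_def by simp

lemma nbrs_finite: "finite (nbrs n E i)" unfolding nbrs_def by auto

lemma sum_nbrs: "(\<Sum>j\<in>nbrs n E i. f j) = (\<Sum>j<n. if E i j then f j else 0)"
  unfolding nbrs_def by (simp add: sum.If_cases Collect_conj_eq lessThan_def Int_commute)

lemma mv_lap:
  assumes irrefl: "\<And>i. i < n \<Longrightarrow> \<not> E i i" and i: "i < n"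
  shows "mv n (lapf n E) y i = real (deg n E i) * y i - (\<Sum>j<n. if E i j then y j else 0)"
proof -
  have "mv n (lapf n E) y i = (\<Sum>j<n. (if i = j then real (deg n E i) * y j else 0) - (if E i j then y j else 0))"
    unfolding mv_def using i by (simp, intro sum.cong refl) (auto simp: lapf_eq irrefl)
  also have "\<dots> = real (deg n E i) * y i - (\<Sum>j<n. if E i j then y j else 0)"
    using i by (simp add: sum_subtractf)
  finally show ?thesis .
qed

lemma deg_sum: "real (deg n E i) = (\<Sum>j<n. if E i j then 1 else 0)"
  unfolding deg_def using sum_nbrs[where n=n and E=E and i=i and f="\<lambda>_. 1::real"] by simp

lemma lap_sym: assumes sym: "\<And>i j. i < n \<Longrightarrow> j < n \<Longrightarrow> E i j \<Longrightarrow> E j i"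
  shows "i < n \<Longrightarrow> j < n \<Longrightarrow> lapf n E i j = lapf n E j i"
  using sym by (auto simp: lapf_eq)

lemma sum_if_diff: "(\<Sum>j\<in>A. if P j then a j - b j else 0) = (\<Sum>j\<in>A. if P j then a j else 0) - (\<Sum>j\<in>A. if P j then b j else (0::real))"
  by (subst sum_subtractf[symmetric]) (rule sum.cong, auto)

lemma sum_if_mult: "(\<Sum>j\<in>A. if P j then c * a j else 0) = c * (\<Sum>j\<in>A. if P j then a j else (0::real))"
  by (subst sum_distrib_left) (rule sum.cong, auto)

lemma swap_sym:
  assumes sym: "\<And>i j. i < n \<Longrightarrow> j < n \<Longrightarrow> E i j \<Longrightarrow> E j i"
  shows "(\<Sum>i<n. \<Sum>j<n. if E i j then f i j else 0) = (\<Sum>i<n. \<Sum>j<n. if E i j then f j i else (0::real))"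
proof -
  have "(\<Sum>i<n. \<Sum>j<n. if E i j then f i j else 0) = (\<Sum>j<n. \<Sum>i<n. if E i j then f i j else 0)"
    by (rule sum.swap)
  also have "\<dots> = (\<Sum>i<n. \<Sum>j<n. if E i j then f j i else 0)"
    using sym by (intro sum.cong refl) (metis lessThan_iff)
  finally show ?thesis .
qed

lemma lap_quad:
  assumes sym: "\<And>i j. i < n \<Longrightarrow> j < n \<Longrightarrow> E i j \<Longrightarrow> E j i"
    and irrefl: "\<And>i. i < n \<Longrightarrow> \<not> E i i"
  shows "2 * ip n y (mv n (lapf n E) y) = (\<Sum>i<n. \<Sum>j<n. if E i j then (y i - y j)\<^sup>2 else 0)"
proof -
  have "ip n y (mv n (lapf n E) y) = (\<Sum>i<n. \<Sum>j<n. if E i j then y i * y i - y i * y j else 0)"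
    unfolding ip_def
  proof (intro sum.cong refl)
    fix i assume "i \<in> {..<n}"
    then have i: "i < n" by simp
    show "y i * mv n (lapf n E) y i = (\<Sum>j<n. if E i j then y i * y i - y i * y j else 0)"
    proof -
      have d: "real (deg n E i) * y i = (\<Sum>j<n. if E i j then y i else 0)"
        unfolding deg_sum sum_distrib_right by (rule sum.cong) auto
      have "y i * mv n (lapf n E) y i = y i * (real (deg n E i) * y i) - y i * (\<Sum>j<n. if E i j then y j else 0)"
        by (simp only: mv_lap[of n E i y, OF irrefl i] right_diff_distrib)
      also have "\<dots> = (\<Sum>j<n. if E i j then y i * y i else 0) - (\<Sum>j<n. if E i j then y i * y j else 0)"
        unfolding d sum_if_mult[symmetric] ..
      finally show ?thesis unfolding sum_if_diff .
    qed
  qed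
  moreover have "(\<Sum>i<n. \<Sum>j<n. if E i j then y j * y j else 0) = (\<Sum>i<n. \<Sum>j<n. if E i j then y i * y i else (0::real))"
    using swap_sym[where n=n and E=E and f="\<lambda>i j. y j * y j", OF sym] by simp
  moreover have "(\<Sum>i<n. \<Sum>j<n. if E i j then (y i - y j)\<^sup>2 else 0) =
     (\<Sum>i<n. \<Sum>j<n. if E i j then y i * y i - y i * y j else 0) +
     (\<Sum>i<n. \<Sum>j<n. if E i j then y j * y j - y i * y j else (0::real))"
    unfolding sum.distrib[symmetric] by (intro sum.cong refl) (simp add: power2_eq_square algebra_simps)
  moreover have "(\<Sum>i<n. \<Sum>j<n. if E i j then y j * y j - y i * y j else (0::real)) =
      (\<Sum>i<n. \<Sum>j<n. if E i j then y j * y j else 0) - (\<Sum>i<n. \<Sum>j<n. if E i j then y i * y j else 0)"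
    by (simp add: sum_subtractf[symmetric] sum_if_diff)
  moreover have "(\<Sum>i<n. \<Sum>j<n. if E i j then y i * y i - y i * y j else (0::real)) =
      (\<Sum>i<n. \<Sum>j<n. if E i j then y i * y i else 0) - (\<Sum>i<n. \<Sum>j<n. if E i j then y i * y j else 0)"
    by (simp add: sum_subtractf[symmetric] sum_if_diff)
  ultimately show ?thesis by simp
qed


lemma sum_single_nz:
  assumes "finite A" "k0 \<in> A" "\<And>k. k \<in> A \<Longrightarrow> k \<noteq> k0 \<Longrightarrow> f k = 0"
  shows "sum f A = (f k0 :: real)"
  using assms by (subst sum.remove[of A k0]) (auto intro!: sum.neutral)

lemma lap_rayleigh:
  assumes n2: "n \<ge> 2"
    and sym: "\<And>i j. i < n \<Longrightarrow> j < n \<Longrightarrow> E i j \<Longrightarrow> E j i"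
    and irrefl: "\<And>i. i < n \<Longrightarrow> \<not> E i i"
    and pos: "lambda2 n E > 0"
    and ysum: "(\<Sum>i<n. y i) = 0"
  shows "ip n y (mv n (lapf n E) y) \<ge> lambda2 n E * ip n y y"
proof -
  let ?a = "lapf n E"
  have asym: "\<And>i j. i < n \<Longrightarrow> j < n \<Longrightarrow> ?a i j = ?a j i"
    using lap_sym[where n=n and E=E, OF sym] by blast
  obtain u \<mu> where on: "orthonormal n n u"
    and ev: "\<forall>l<n. supp n (u l) \<and> mv n ?a (u l) = (\<lambda>i. \<mu> l * u l i)"
    using eig_basis[where n=n and a="?a", OF asym, of n] by blast
  have cp: "char_poly (laplacian n E) = (\<Prod>x\<leftarrow>map \<mu> [0..<n]. [:- x, 1:])"
    by (rule char_poly_diag) (use on ev in \<open>auto simp: laplacian_def lapf_def[abs_def]\<close>)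
  define t where "t = lambda2 n E"
  have t: "t = sort (map \<mu> [0..<n]) ! 1"
    unfolding t_def lambda2_def lap_eigenvalues_def cp proots_prod_lin sorted_list_of_multiset_mset ..
  define K where "K = {k. k < n \<and> \<mu> k < t}"
  have cardK: "card K \<le> 1" unfolding K_def t using card_less_second[OF n2] .
  have finK: "finite K" unfolding K_def by auto
  define one where "one = (\<lambda>i. if i < n then 1 else (0::real))"
  have mvone: "mv n ?a one i = 0" for i
  proof (cases "i < n")
    case True
    have "mv n ?a one i = real (deg n E i) * 1 - (\<Sum>j<n. if E i j then 1 else 0)"
      using mv_lap[of n E i one, OF irrefl True] True unfolding one_def
      by (simp cong: if_cong)
    then show ?thesis using deg_sum[of n E i] by simp
  next
    case False then show ?thesis unfolding mv_def by simp
  qed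
  define d where "d k = ip n one (u k)" for k
  define c where "c k = ip n y (u k)" for k
  have mud: "\<mu> k * d k = 0" if "k < n" for k
  proof -
    have "\<mu> k * d k = ip n one (mv n ?a (u k))" unfolding d_def using ev that by (simp add: ip_scale_right)
    also have "\<dots> = ip n (mv n ?a one) (u k)" by (rule mv_sym[where a="?a", OF asym, symmetric])
    also have "\<dots> = 0" unfolding ip_def mvone by simp
    finally show ?thesis .
  qed
  have yy: "ip n y y = (\<Sum>k<n. (c k)\<^sup>2)" unfolding c_def parseval[OF on, of y y] by (simp add: power2_eq_square)
  have oo: "(\<Sum>k<n. (d k)\<^sup>2) = real n"
  proof -
    have "ip n one one = real n" unfolding ip_def one_def by simp
    then show ?thesis unfolding d_def parseval[OF on, of one one] by (simp add: power2_eq_square)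
  qed
  have yo: "(\<Sum>k<n. c k * d k) = 0"
  proof -
    have "ip n y one = 0" unfolding ip_def one_def using ysum by simp
    then show ?thesis unfolding c_def d_def parseval[OF on, of y one] .
  qed
  have yAy: "ip n y (mv n ?a y) = (\<Sum>k<n. \<mu> k * (c k)\<^sup>2)"
  proof -
    have "ip n y (mv n ?a y) = ip n (mv n ?a y) y" by (rule ip_sym)
    also have "\<dots> = (\<Sum>k<n. ip n (mv n ?a y) (u k) * c k)" unfolding c_def by (rule parseval[OF on])
    also have "\<dots> = (\<Sum>k<n. \<mu> k * (c k)\<^sup>2)"
    proof (intro sum.cong refl)
      fix k assume "k \<in> {..<n}"
      then have k: "k < n" by simp
      have "ip n (mv n ?a y) (u k) = ip n y (mv n ?a (u k))" by (rule mv_sym[where a="?a", OF asym])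
      also have "\<dots> = \<mu> k * c k" unfolding c_def using ev k by (simp add: ip_scale_right)
      finally show "ip n (mv n ?a y) (u k) * c k = \<mu> k * (c k)\<^sup>2" by (simp add: power2_eq_square)
    qed
    finally show ?thesis .
  qed
  have ck0: "c k0 = 0" if k0: "k0 < n" "\<mu> k0 < t" for k0
  proof -
    have others: "d k = 0" if "k < n" "k \<noteq> k0" for k
    proof -
      have "\<mu> k \<ge> t"
      proof (rule ccontr)
        assume "\<not> \<mu> k \<ge> t"
        then have "{k, k0} \<subseteq> K" unfolding K_def using k0 that by auto
        then have "card {k, k0} \<le> card K" using finK by (rule card_mono[rotated])
        then show False using cardK that by simp
      qed
      then have "\<mu> k \<noteq> 0" using pos unfolding t_def by linarith
      then show ?thesis using mud[OF that(1)] by simp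
    qed
    have "(\<Sum>k<n. (d k)\<^sup>2) = (d k0)\<^sup>2" by (rule sum_single_nz) (use k0 others in auto)
    then have "d k0 \<noteq> 0" using oo n2 by auto
    moreover have "(\<Sum>k<n. c k * d k) = c k0 * d k0" by (rule sum_single_nz) (use k0 others in auto)
    ultimately show ?thesis using yo by simp
  qed
  have "ip n y (mv n ?a y) - t * ip n y y = (\<Sum>k<n. (\<mu> k - t) * (c k)\<^sup>2)"
    unfolding yAy yy by (simp add: sum_distrib_left sum_subtractf[symmetric] algebra_simps)
  also have "\<dots> \<ge> 0"
  proof (intro sum_nonneg)
    fix k assume "k \<in> {..<n}"
    then show "(\<mu> k - t) * (c k)\<^sup>2 \<ge> 0" using ck0[of k] by (cases "\<mu> k < t") auto
  qed
  finally show ?thesis unfolding t_def by simp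
qed


lemma exp_sum_fin: "finite (set_pmf M) \<Longrightarrow>
  measure_pmf.expectation M (\<lambda>x. \<Sum>j\<in>J. f j x) = (\<Sum>j\<in>J. measure_pmf.expectation M (f j :: _ \<Rightarrow> real))"
  by (rule Bochner_Integration.integral_sum) (auto simp: integrable_measure_pmf_finite)

lemma exp_sq_dev:
  assumes fin: "\<And>a. a \<in> set as \<Longrightarrow> finite (set_pmf (f a))"
  shows "measure_pmf.expectation (sample_all f as) (\<lambda>ds. (real (count_list ds j) - c)\<^sup>2 / s)
       = (((\<Sum>a\<leftarrow>as. pmf (f a) j) - c)\<^sup>2 + (\<Sum>a\<leftarrow>as. pmf (f a) j * (1 - pmf (f a) j))) / s"
proof -
  have fs: "finite (set_pmf (sample_all f as))" using fin by (rule sample_all_fin)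
  have "measure_pmf.expectation (sample_all f as) (\<lambda>ds. (real (count_list ds j) - c)\<^sup>2 / s)
    = measure_pmf.expectation (sample_all f as) (\<lambda>ds. (1/s) * (real (count_list ds j))\<^sup>2 + ((- 2 * c / s) * real (count_list ds j) + c\<^sup>2 / s))"
    by (intro Bochner_Integration.integral_cong refl) (cases "s = 0"; simp add: power2_eq_square field_simps)
  also have "\<dots> = (1/s) * measure_pmf.expectation (sample_all f as) (\<lambda>ds. (real (count_list ds j))\<^sup>2)
      + ((- 2 * c / s) * measure_pmf.expectation (sample_all f as) (\<lambda>ds. real (count_list ds j)) + c\<^sup>2 / s)"
    by (subst exp_add_fin[OF fs], subst exp_add_fin[OF fs]) simp
  also have "\<dots> = (((\<Sum>a\<leftarrow>as. pmf (f a) j) - c)\<^sup>2 + (\<Sum>a\<leftarrow>as. pmf (f a) j * (1 - pmf (f a) j))) / s"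
    using sample_all_E1[of as f j, OF fin] sample_all_E2[of as f j, OF fin]
    by (cases "s = 0"; simp add: power2_eq_square field_simps)
  finally show ?thesis .
qed

lemma sum_list_task_origins:
  "(\<Sum>a\<leftarrow>task_origins n w. g a) = (\<Sum>a<n. real (w a) * (g a :: real))"
  unfolding task_origins_def
  by (induction n) (auto simp: sum_list_replicate)

lemma set_task_origins: "set (task_origins n w) \<subseteq> {..<n}"
  unfolding task_origins_def by auto

lemma nbrs_fin: "finite (nbrs n E i)" unfolding nbrs_def by auto

lemma task_step_set: "set_pmf (task_step n E s w i) \<subseteq> insert i (nbrs n E i)"
  unfolding task_step_def using nbrs_fin[of n E i] by (auto split: if_splits)

lemma task_step_fin: "finite (set_pmf (task_step n E s w i))"
  by (rule finite_subset[OF task_step_set]) (simp add: nbrs_fin)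


lemma pmf_bern_choice:
  assumes "0 \<le> p" "p \<le> 1"
  shows "pmf (bernoulli_pmf p \<bind> (\<lambda>b. return_pmf (if b then k else i))) j
       = p * (if k = j then 1 else 0) + (1 - p) * (if i = j then 1 else 0)"
proof -
  have "pmf (bernoulli_pmf p \<bind> (\<lambda>b. return_pmf (if b then k else i))) j
      = measure_pmf.expectation (bernoulli_pmf p) (\<lambda>b. pmf (return_pmf (if b then k else i)) j)"
    by (rule pmf_bind)
  also have "\<dots> = (\<Sum>b\<in>UNIV. pmf (bernoulli_pmf p) b * pmf (return_pmf (if b then k else i)) j)"
    by (subst integral_measure_pmf[of UNIV]) auto
  also have "\<dots> = p * (if k = j then 1 else 0) + (1 - p) * (if i = j then 1 else 0)"
    using assms by (simp add: UNIV_bool indicator_def)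
  finally show ?thesis .
qed


lemma pmf_task_step:
  assumes q01: "\<And>k. k \<in> nbrs n E i \<Longrightarrow> 0 \<le> move_prob n E s w i k \<and> move_prob n E s w i k \<le> 1"
    and ni: "i \<notin> nbrs n E i"
  shows "j \<noteq> i \<Longrightarrow> pmf (task_step n E s w i) j = (if j \<in> nbrs n E i then move_prob n E s w i j / real (deg n E i) else 0)"
    and "pmf (task_step n E s w i) i = 1 - (\<Sum>k\<in>nbrs n E i. move_prob n E s w i k) / real (deg n E i)"
proof -
  let ?N = "nbrs n E i"
  let ?q = "move_prob n E s w i"
  have fin: "finite ?N" by (rule nbrs_fin)
  have gen: "pmf (task_step n E s w i) j' =
     (if ?N = {} then (if i = j' then 1 else 0)
      else (\<Sum>k\<in>?N. ?q k * (if k = j' then 1 else 0) + (1 - ?q k) * (if i = j' then 1 else 0)) / real (card ?N))" for j'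
  proof (cases "?N = {}")
    case True then show ?thesis unfolding task_step_def by (simp add: indicator_def)
  next
    case False
    then have "pmf (task_step n E s w i) j' = (\<Sum>k\<in>?N. pmf (bernoulli_pmf (?q k) \<bind> (\<lambda>b. return_pmf (if b then k else i))) j') / real (card ?N)"
      unfolding task_step_def using fin by (simp add: pmf_bind_pmf_of_set)
    also have "\<dots> = (\<Sum>k\<in>?N. ?q k * (if k = j' then 1 else 0) + (1 - ?q k) * (if i = j' then 1 else 0)) / real (card ?N)"
      using q01 by (intro arg_cong2[where f="(/)"] sum.cong refl pmf_bern_choice) auto
    finally show ?thesis using False by simp
  qed
  show "pmf (task_step n E s w i) j = (if j \<in> ?N then ?q j / real (deg n E i) else 0)" if ji: "j \<noteq> i"
  proof (cases "?N = {}")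
    case True then show ?thesis using gen[of j] ji by simp
  next
    case False
    have "(\<Sum>k\<in>?N. ?q k * (if k = j then 1 else 0) + (1 - ?q k) * (if i = j then 1 else 0)) = (\<Sum>k\<in>?N. if k = j then ?q k else 0)"
      using ji by (intro sum.cong) auto
    also have "\<dots> = (if j \<in> ?N then ?q j else 0)" using fin by (simp add: sum.delta)
    finally show ?thesis using gen[of j] False unfolding deg_def by simp
  qed
  show "pmf (task_step n E s w i) i = 1 - (\<Sum>k\<in>?N. ?q k) / real (deg n E i)"
  proof (cases "?N = {}")
    case True then show ?thesis using gen[of i] by simp
  next
    case False
    then have cpos: "real (card ?N) > 0" using fin by (simp add: card_gt_0_iff)
    have "(\<Sum>k\<in>?N. ?q k * (if k = i then 1 else 0) + (1 - ?q k) * (if i = i then 1 else 0)) = (\<Sum>k\<in>?N. 1 - ?q k)"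
      using ni by (intro sum.cong) auto
    also have "\<dots> = real (card ?N) - (\<Sum>k\<in>?N. ?q k)" by (simp add: sum_subtractf)
    finally show ?thesis using gen[of i] False cpos unfolding deg_def by (simp add: field_simps)
  qed
qed


lemma swap2: "(\<Sum>j<n. \<Sum>k<n. f k j) = (\<Sum>j<n. \<Sum>k<(n::nat). (f j k :: real))"
  by (rule sum.swap)

lemma drop_bound:
  fixes \<phi> :: "nat \<Rightarrow> nat \<Rightarrow> real" and V \<mu> :: "nat \<Rightarrow> real"
  assumes sym: "\<And>i j. i < n \<Longrightarrow> j < n \<Longrightarrow> E i j \<Longrightarrow> E j i"
    and spos: "\<And>i. i < n \<Longrightarrow> s i > 0"
    and Spos: "Stot n s > 0"
    and tasks: "(\<Sum>i<n. w i) = m"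
    and phi0: "\<And>i j. i < n \<Longrightarrow> j < n \<Longrightarrow> \<phi> i j \<ge> 0"
    and phiE: "\<And>i j. i < n \<Longrightarrow> j < n \<Longrightarrow> \<not> E i j \<Longrightarrow> \<phi> i j = 0"
    and mu: "\<And>j. j < n \<Longrightarrow> \<mu> j = real (w j) - (\<Sum>k<n. \<phi> j k) + (\<Sum>k<n. \<phi> k j)"
    and Vb: "\<And>j. j < n \<Longrightarrow> V j \<le> (\<Sum>k<n. \<phi> j k + \<phi> k j)"
  shows "Psi0 n s m w - (\<Sum>j<n. ((\<mu> j - real m * s j / Stot n s)\<^sup>2 + V j) / s j)
     \<ge> (\<Sum>j<n. \<Sum>k<n. \<phi> j k * (2 * (real (w j) / s j - real (w k) / s k)
            - \<phi> j k * (real (deg n E j) / s j + real (deg n E k) / s k) - (1 / s j + 1 / s k)))"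
proof -
  define L where "L = real m / Stot n s"
  define e where "e j = real (w j) - real m * s j / Stot n s" for j
  define D where "D j = (\<Sum>k<n. \<phi> k j - \<phi> j k)" for j
  define l where "l j = real (w j) / s j" for j
  have el: "e j / s j = l j - L" if "j < n" for j
    using spos[OF that] unfolding e_def l_def L_def by (simp add: field_simps)
  have muD: "\<mu> j - real m * s j / Stot n s = e j + D j" if "j < n" for j
    using mu[OF that] unfolding e_def D_def by (simp add: sum_subtractf)
  have step1: "Psi0 n s m w - (\<Sum>j<n. ((\<mu> j - real m * s j / Stot n s)\<^sup>2 + V j) / s j)
      \<ge> (\<Sum>j<n. (- 2 * (e j / s j) * D j) - (D j)\<^sup>2 / s j - (\<Sum>k<n. \<phi> j k + \<phi> k j) / s j)"
  proof -
    have "Psi0 n s m w - (\<Sum>j<n. ((\<mu> j - real m * s j / Stot n s)\<^sup>2 + V j) / s j)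
        = (\<Sum>j<n. ((e j)\<^sup>2 - (e j + D j)\<^sup>2 - V j) / s j)"
      unfolding Psi0_def e_def[symmetric] by (simp add: sum_subtractf[symmetric] muD diff_divide_distrib add_divide_distrib diff_diff_eq)
    also have "\<dots> \<ge> (\<Sum>j<n. (- 2 * (e j / s j) * D j) - (D j)\<^sup>2 / s j - (\<Sum>k<n. \<phi> j k + \<phi> k j) / s j)"
    proof (intro sum_mono)
      fix j assume "j \<in> {..<n}"
      then have j: "j < n" by simp
      have "((e j)\<^sup>2 - (e j + D j)\<^sup>2 - V j) / s j \<ge> ((e j)\<^sup>2 - (e j + D j)\<^sup>2 - (\<Sum>k<n. \<phi> j k + \<phi> k j)) / s j"
        using Vb[OF j] spos[OF j] by (intro divide_right_mono) auto
      moreover have "((e j)\<^sup>2 - (e j + D j)\<^sup>2 - (\<Sum>k<n. \<phi> j k + \<phi> k j)) / s j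
          = (- 2 * (e j / s j) * D j) - (D j)\<^sup>2 / s j - (\<Sum>k<n. \<phi> j k + \<phi> k j) / s j"
        using spos[OF j] by (simp add: field_simps power2_eq_square)
      ultimately show "(- 2 * (e j / s j) * D j) - (D j)\<^sup>2 / s j - (\<Sum>k<n. \<phi> j k + \<phi> k j) / s j
          \<le> ((e j)\<^sup>2 - (e j + D j)\<^sup>2 - V j) / s j" by simp
    qed
    finally show ?thesis .
  qed
  have partA: "(\<Sum>j<n. (e j / s j) * D j) = (\<Sum>j<n. \<Sum>k<n. \<phi> j k * (l k - l j))"
  proof -
    have "(\<Sum>j<n. (e j / s j) * D j) = (\<Sum>j<n. \<Sum>k<n. (l j - L) * \<phi> k j - (l j - L) * \<phi> j k)"
      unfolding D_def by (intro sum.cong refl) (simp add: el sum_distrib_left right_diff_distrib)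
    also have "\<dots> = (\<Sum>j<n. \<Sum>k<n. (l j - L) * \<phi> k j) - (\<Sum>j<n. \<Sum>k<n. (l j - L) * \<phi> j k)"
      by (simp add: sum_subtractf)
    also have "(\<Sum>j<n. \<Sum>k<n. (l j - L) * \<phi> k j) = (\<Sum>j<n. \<Sum>k<n. (l k - L) * \<phi> j k)"
      by (rule swap2)
    also have "(\<Sum>j<n. \<Sum>k<n. (l k - L) * \<phi> j k) - (\<Sum>j<n. \<Sum>k<n. (l j - L) * \<phi> j k)
        = (\<Sum>j<n. \<Sum>k<n. \<phi> j k * (l k - l j))"
      by (simp add: sum_subtractf[symmetric] algebra_simps)
    finally show ?thesis .
  qed
  have partB: "(\<Sum>j<n. (D j)\<^sup>2 / s j) \<le> (\<Sum>j<n. \<Sum>k<n. (\<phi> j k)\<^sup>2 * (real (deg n E j) / s j + real (deg n E k) / s k))"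
  proof -
    have Dj: "(D j)\<^sup>2 \<le> real (deg n E j) * (\<Sum>k<n. (\<phi> k j)\<^sup>2 + (\<phi> j k)\<^sup>2)" if j: "j < n" for j
    proof -
      have "D j = (\<Sum>k\<in>nbrs n E j. \<phi> k j - \<phi> j k)"
        unfolding D_def sum_nbrs using phiE j sym by (intro sum.cong refl) auto
      then have "(D j)\<^sup>2 \<le> (\<Sum>k\<in>nbrs n E j. (\<phi> k j - \<phi> j k)\<^sup>2) * real (card (nbrs n E j))"
        using sum_squared_le_sum_of_squares by simp
      also have "(\<Sum>k\<in>nbrs n E j. (\<phi> k j - \<phi> j k)\<^sup>2) \<le> (\<Sum>k<n. (\<phi> k j)\<^sup>2 + (\<phi> j k)\<^sup>2)"
      proof -
        have "(\<Sum>k\<in>nbrs n E j. (\<phi> k j - \<phi> j k)\<^sup>2) \<le> (\<Sum>k\<in>nbrs n E j. (\<phi> k j)\<^sup>2 + (\<phi> j k)\<^sup>2)"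
        proof (intro sum_mono)
          fix k assume "k \<in> nbrs n E j"
          then have k: "k < n" unfolding nbrs_def by simp
          have "0 \<le> \<phi> k j * \<phi> j k" using phi0 j k by simp
          then show "(\<phi> k j - \<phi> j k)\<^sup>2 \<le> (\<phi> k j)\<^sup>2 + (\<phi> j k)\<^sup>2" by (simp add: power2_eq_square algebra_simps)
        qed
        also have "\<dots> \<le> (\<Sum>k<n. (\<phi> k j)\<^sup>2 + (\<phi> j k)\<^sup>2)"
          by (rule sum_mono2) (auto simp: nbrs_def)
        finally show ?thesis .
      qed
      then have "(\<Sum>k\<in>nbrs n E j. (\<phi> k j - \<phi> j k)\<^sup>2) * real (card (nbrs n E j)) \<le> (\<Sum>k<n. (\<phi> k j)\<^sup>2 + (\<phi> j k)\<^sup>2) * real (card (nbrs n E j))"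
        by (intro mult_right_mono) auto
      finally show ?thesis unfolding deg_def by (simp add: mult.commute)
    qed
    have "(\<Sum>j<n. (D j)\<^sup>2 / s j) \<le> (\<Sum>j<n. real (deg n E j) / s j * (\<Sum>k<n. (\<phi> k j)\<^sup>2 + (\<phi> j k)\<^sup>2))"
    proof (intro sum_mono)
      fix j assume "j \<in> {..<n}"
      then have j: "j < n" by simp
      show "(D j)\<^sup>2 / s j \<le> real (deg n E j) / s j * (\<Sum>k<n. (\<phi> k j)\<^sup>2 + (\<phi> j k)\<^sup>2)"
        using divide_right_mono[OF Dj[OF j], of "s j"] spos[OF j] by (simp add: field_simps)
    qed
    also have "\<dots> = (\<Sum>j<n. \<Sum>k<n. real (deg n E j) / s j * (\<phi> k j)\<^sup>2) + (\<Sum>j<n. \<Sum>k<n. real (deg n E j) / s j * (\<phi> j k)\<^sup>2)"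
      by (simp add: sum_distrib_left distrib_left sum.distrib)
    also have "(\<Sum>j<n. \<Sum>k<n. real (deg n E j) / s j * (\<phi> k j)\<^sup>2) = (\<Sum>j<n. \<Sum>k<n. real (deg n E k) / s k * (\<phi> j k)\<^sup>2)"
      by (rule swap2)
    also have "(\<Sum>j<n. \<Sum>k<n. real (deg n E k) / s k * (\<phi> j k)\<^sup>2) + (\<Sum>j<n. \<Sum>k<n. real (deg n E j) / s j * (\<phi> j k)\<^sup>2)
      = (\<Sum>j<n. \<Sum>k<n. (\<phi> j k)\<^sup>2 * (real (deg n E j) / s j + real (deg n E k) / s k))"
      by (simp add: sum.distrib[symmetric] algebra_simps)
    finally show ?thesis .
  qed
  have partC: "(\<Sum>j<n. (\<Sum>k<n. \<phi> j k + \<phi> k j) / s j) = (\<Sum>j<n. \<Sum>k<n. \<phi> j k * (1 / s j + 1 / s k))"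
  proof -
    have "(\<Sum>j<n. (\<Sum>k<n. \<phi> j k + \<phi> k j) / s j) = (\<Sum>j<n. \<Sum>k<n. \<phi> j k / s j) + (\<Sum>j<n. \<Sum>k<n. \<phi> k j / s j)"
      by (simp add: sum_divide_distrib add_divide_distrib sum.distrib)
    also have "(\<Sum>j<n. \<Sum>k<n. \<phi> k j / s j) = (\<Sum>j<n. \<Sum>k<n. \<phi> j k / s k)" by (rule swap2)
    also have "(\<Sum>j<n. \<Sum>k<n. \<phi> j k / s j) + (\<Sum>j<n. \<Sum>k<n. \<phi> j k / s k) = (\<Sum>j<n. \<Sum>k<n. \<phi> j k * (1 / s j + 1 / s k))"
      by (simp add: sum.distrib[symmetric] algebra_simps)
    finally show ?thesis .
  qed
  have "(\<Sum>j<n. (- 2 * (e j / s j) * D j) - (D j)\<^sup>2 / s j - (\<Sum>k<n. \<phi> j k + \<phi> k j) / s j)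
      = - 2 * (\<Sum>j<n. (e j / s j) * D j) - (\<Sum>j<n. (D j)\<^sup>2 / s j) - (\<Sum>j<n. (\<Sum>k<n. \<phi> j k + \<phi> k j) / s j)"
    by (simp add: sum_subtractf sum_distrib_left mult.assoc)
  also have "\<dots> \<ge> (\<Sum>j<n. \<Sum>k<n. \<phi> j k * (2 * (l j - l k) - \<phi> j k * (real (deg n E j) / s j + real (deg n E k) / s k) - (1 / s j + 1 / s k)))"
  proof -
    have "(\<Sum>j<n. \<Sum>k<n. \<phi> j k * (2 * (l j - l k) - \<phi> j k * (real (deg n E j) / s j + real (deg n E k) / s k) - (1 / s j + 1 / s k)))
      = - 2 * (\<Sum>j<n. \<Sum>k<n. \<phi> j k * (l k - l j)) - (\<Sum>j<n. \<Sum>k<n. (\<phi> j k)\<^sup>2 * (real (deg n E j) / s j + real (deg n E k) / s k))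
        - (\<Sum>j<n. \<Sum>k<n. \<phi> j k * (1 / s j + 1 / s k))"
      by (simp add: sum_subtractf[symmetric] sum_distrib_left power2_eq_square algebra_simps)
    then show ?thesis using partA partB partC by linarith
  qed
  finally show ?thesis using step1 unfolding l_def by linarith
qed


lemma pair_bound:
  fixes x sj sk sm d D dj dk :: real
  assumes sj: "sj \<ge> 1" and sk: "sk \<ge> 1" and sm: "sm \<ge> 1" and d1: "d \<ge> 1"
    and djd: "dj \<le> d" and dkd: "dk \<le> d" and dD: "d \<le> D" and dj0: "dj \<ge> 0" and dk0: "dk \<ge> 0"
  defines "c \<equiv> 1 / sj + 1 / sk"
  defines "\<phi> \<equiv> (if x > 1 / sk then x / (4 * sm * c * d) else 0)"
  shows "\<phi> * (2 * x - \<phi> * (dj / sj + dk / sk) - c) \<ge> (max 0 x)\<^sup>2 / (16 * D * sm) - 1 / (10 * sm * d)"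
proof (cases "x > 1 / sk")
  case False
  then have ph: "\<phi> = 0" unfolding \<phi>_def by simp
  have "1 / sk \<le> 1" using sk by simp
  then have "max 0 x \<le> 1" using False by simp
  then have "(max 0 x)\<^sup>2 \<le> 1" by (simp add: power_le_one)
  then have "(max 0 x)\<^sup>2 / (16 * D * sm) \<le> 1 / (16 * D * sm)"
    using dD d1 sm by (intro divide_right_mono) auto
  also have "\<dots> \<le> 1 / (10 * sm * d)"
    using dD d1 sm by (intro divide_left_mono) (auto intro!: mult_mono mult_pos_pos)
  finally show ?thesis unfolding ph by simp
next
  case True
  have cpos: "c > 0" unfolding c_def using sj sk by (auto simp: add_pos_pos)
  have "1 / sj \<le> 1" "1 / sk \<le> 1" using sj sk by auto
  then have c2: "c \<le> 2" unfolding c_def by linarith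
  have xpos: "x > 0" using True sk by (smt (verit) divide_pos_pos)
  define K where "K = 4 * sm * d"
  have Kpos: "K > 0" unfolding K_def using sm d1 by simp
  have ph: "\<phi> = x / (K * c)" unfolding \<phi>_def K_def using True by (simp add: mult.assoc)
  have php: "\<phi> > 0" unfolding ph using xpos Kpos cpos by simp
  have "dj / sj + dk / sk \<le> d / sj + d / sk"
    using sj sk djd dkd by (intro add_mono divide_right_mono) auto
  also have "\<dots> = d * c" unfolding c_def by (simp add: field_simps)
  finally have degb: "dj / sj + dk / sk \<le> d * c" .
  have "\<phi> * (dj / sj + dk / sk) \<le> \<phi> * (d * c)" using php degb by (intro mult_left_mono) auto
  also have "\<phi> * (d * c) = x / (4 * sm)" unfolding ph K_def using cpos d1 sm by (simp add: field_simps)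
  also have "\<dots> \<le> x / 4" using xpos sm by (intro divide_left_mono) auto
  finally have b1: "\<phi> * (dj / sj + dk / sk) \<le> x / 4" .
  have "\<phi> * (2 * x - \<phi> * (dj / sj + dk / sk) - c) \<ge> \<phi> * (7 * x / 4 - c)"
    using php b1 by (intro mult_left_mono) auto
  moreover have "\<phi> * (7 * x / 4 - c) = (7 * x\<^sup>2 / (4 * c) - x) / K"
    unfolding ph using cpos Kpos by (simp add: field_simps power2_eq_square)
  moreover have "7 * x\<^sup>2 / (4 * c) \<ge> 7 * x\<^sup>2 / 8"
    using cpos c2 by (intro divide_left_mono) auto
  moreover have "(7 * x\<^sup>2 / 8 - x) \<ge> x\<^sup>2 / 4 - 2 / 5"
  proof -
    have "0 \<le> 5 / 8 * (x - 4 / 5)\<^sup>2" by simp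
    then show ?thesis by (simp add: power2_eq_square algebra_simps)
  qed
  moreover have "(max 0 x)\<^sup>2 / (16 * D * sm) - 1 / (10 * sm * d) \<le> (x\<^sup>2 / 4 - 2 / 5) / K"
  proof -
    have "(max 0 x)\<^sup>2 / (16 * D * sm) = x\<^sup>2 / (16 * D * sm)" using xpos by simp
    also have "\<dots> \<le> x\<^sup>2 / (16 * d * sm)"
      using dD d1 sm by (intro divide_left_mono) (auto intro!: mult_mono)
    finally have "(max 0 x)\<^sup>2 / (16 * D * sm) - 1 / (10 * sm * d) \<le> x\<^sup>2 / (16 * d * sm) - 1 / (10 * sm * d)" by simp
    also have "\<dots> = (x\<^sup>2 / 4 - 2 / 5) / K" unfolding K_def using sm d1 by (simp add: field_simps)
    finally show ?thesis .
  qed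
  ultimately have "\<phi> * (2 * x - \<phi> * (dj / sj + dk / sk) - c) \<ge> (x\<^sup>2 / 4 - 2 / 5) / K - 0"
    using Kpos by (smt (verit) divide_right_mono)
  moreover note \<open>(max 0 x)\<^sup>2 / (16 * D * sm) - 1 / (10 * sm * d) \<le> (x\<^sup>2 / 4 - 2 / 5) / K\<close>
  ultimately show ?thesis by linarith
qed


lemma sum_if_eq:
  assumes "finite A" "j \<in> A"
  shows "(\<Sum>a\<in>A. if a = j then X else f a) = X + (\<Sum>a\<in>A. f a) - (f j :: real)"
proof -
  have "(\<Sum>a\<in>A. if a = j then X else f a) = X + (\<Sum>a\<in>A - {j}. f a)"
    using assms by (subst sum.remove[of A j]) (auto intro!: sum.cong)
  also have "(\<Sum>a\<in>A - {j}. f a) = (\<Sum>a\<in>A. f a) - f j"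
    using assms by (simp add: sum_diff1)
  finally show ?thesis by simp
qed

lemma sum_inv_deg:
  assumes sym: "\<And>i j. i < n \<Longrightarrow> j < n \<Longrightarrow> E i j \<Longrightarrow> E j i"
  shows "(\<Sum>j<n. \<Sum>k<n. if E j k then 1 / real (max (deg n E j) (deg n E k)) else 0) \<le> real n"
proof -
  have "(\<Sum>k<n. if E j k then 1 / real (max (deg n E j) (deg n E k)) else 0) \<le> 1" if j: "j < n" for j
  proof -
    have "(\<Sum>k<n. if E j k then 1 / real (max (deg n E j) (deg n E k)) else 0)
        \<le> (\<Sum>k<n. if E j k then 1 / real (deg n E j) else 0)"
    proof (intro sum_mono)
      fix k assume k: "k \<in> {..<n}"
      show "(if E j k then 1 / real (max (deg n E j) (deg n E k)) else 0) \<le> (if E j k then 1 / real (deg n E j) else 0)"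
      proof (cases "E j k")
        case True
        then have "k \<in> nbrs n E j" using k unfolding nbrs_def by simp
        then have "deg n E j > 0" unfolding deg_def using nbrs_fin[of n E j] card_gt_0_iff by blast
        then show ?thesis using True by (simp add: frac_le)
      qed simp
    qed
    also have "\<dots> = (1 / real (deg n E j)) * (\<Sum>k<n. if E j k then 1 else 0)"
      using sum_if_mult[where A="{..<n}" and P="E j" and c="1 / real (deg n E j)" and a="\<lambda>_. 1"] by (simp only: mult_1_right)
    also have "\<dots> = real (deg n E j) * (1 / real (deg n E j))"
      using deg_sum[of n E j] by simp
    also have "\<dots> \<le> 1" by (cases "deg n E j = 0") auto
    finally show ?thesis .
  qed
  then have "(\<Sum>j<n. \<Sum>k<n. if E j k then 1 / real (max (deg n E j) (deg n E k)) else 0) \<le> (\<Sum>j<n. 1)"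
    by (intro sum_mono) auto
  then show ?thesis by simp
qed

lemma half_sq:
  fixes x :: "nat \<Rightarrow> real"
  assumes sym: "\<And>i j. i < n \<Longrightarrow> j < n \<Longrightarrow> E i j \<Longrightarrow> E j i"
  shows "(\<Sum>j<n. \<Sum>k<n. if E j k then (max 0 (x j - x k))\<^sup>2 else 0)
       = (\<Sum>j<n. \<Sum>k<n. if E j k then (x j - x k)\<^sup>2 else 0) / 2"
proof -
  have "(\<Sum>j<n. \<Sum>k<n. if E j k then (max 0 (x j - x k))\<^sup>2 else 0)
      = (\<Sum>j<n. \<Sum>k<n. if E j k then (max 0 (x k - x j))\<^sup>2 else 0)"
    by (rule swap_sym[where n=n and E=E and f="\<lambda>j k. (max 0 (x j - x k))\<^sup>2", OF sym])
  moreover have "(\<Sum>j<n. \<Sum>k<n. if E j k then (max 0 (x j - x k))\<^sup>2 else 0)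
      + (\<Sum>j<n. \<Sum>k<n. if E j k then (max 0 (x k - x j))\<^sup>2 else 0)
      = (\<Sum>j<n. \<Sum>k<n. if E j k then (x j - x k)\<^sup>2 else 0)"
    unfolding sum.distrib[symmetric]
    by (intro sum.cong refl) (auto simp: max_def power2_eq_square algebra_simps)
  ultimately show ?thesis by simp
qed

lemma spectral_final:
  assumes n2: "n \<ge> 2"
    and sym: "\<And>i j. i < n \<Longrightarrow> j < n \<Longrightarrow> E i j \<Longrightarrow> E j i"
    and irrefl: "\<And>i. i < n \<Longrightarrow> \<not> E i i"
    and pos: "lambda2 n E > 0"
  shows "(\<Sum>j<n. \<Sum>k<n. if E j k then (x j - x k)\<^sup>2 else 0)
      \<ge> 2 * lambda2 n E * (\<Sum>j<n. (x j - (\<Sum>i<n. x i) / real n)\<^sup>2)"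
proof -
  define y where "y j = x j - (\<Sum>i<n. x i) / real n" for j
  have ys: "(\<Sum>j<n. y j) = 0" unfolding y_def using n2 by (simp add: sum_subtractf)
  have "(\<Sum>j<n. \<Sum>k<n. if E j k then (x j - x k)\<^sup>2 else 0) = (\<Sum>j<n. \<Sum>k<n. if E j k then (y j - y k)\<^sup>2 else 0)"
    unfolding y_def by (intro sum.cong refl) (auto simp: algebra_simps)
  also have "\<dots> = 2 * ip n y (mv n (lapf n E) y)"
    by (rule lap_quad[where n=n and E=E, OF sym irrefl, symmetric])
  also have "\<dots> \<ge> 2 * (lambda2 n E * ip n y y)"
    using lap_rayleigh[where n=n and E=E, OF n2 sym irrefl pos ys] by simp
  finally show ?thesis unfolding ip_def y_def by (simp add: power2_eq_square mult.assoc)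
qed

lemma psi_bound:
  assumes spos: "\<And>i. i < n \<Longrightarrow> s i > 0" and ssm: "\<And>i. i < n \<Longrightarrow> s i \<le> sm"
    and Spos: "Stot n s > 0" and tasks: "(\<Sum>i<n. w i) = m"
  shows "Psi0 n s m w \<le> sm * (\<Sum>j<n. (real (w j) / s j - a)\<^sup>2)"
proof -
  define L where "L = real m / Stot n s"
  define l where "l j = real (w j) / s j" for j
  have psi: "Psi0 n s m w = (\<Sum>j<n. s j * (l j - L)\<^sup>2)"
    unfolding Psi0_def l_def L_def
    by (intro sum.cong refl) (use spos in \<open>simp add: field_simps power2_eq_square\<close>)
  have z: "(\<Sum>j<n. s j * (l j - L)) = 0"
  proof -
    have "(\<Sum>j<n. s j * (l j - L)) = (\<Sum>j<n. real (w j) - L * s j)"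
    proof (intro sum.cong refl)
      fix j assume "j \<in> {..<n}"
      then have "s j > 0" using spos by simp
      then show "s j * (l j - L) = real (w j) - L * s j" unfolding l_def by (simp add: field_simps)
    qed
    also have "\<dots> = (\<Sum>j<n. real (w j)) - L * Stot n s"
      unfolding Stot_def by (simp add: sum_subtractf sum_distrib_left)
    also have "\<dots> = 0" unfolding L_def using Spos tasks by (simp flip: of_nat_sum)
    finally show ?thesis .
  qed
  have "(\<Sum>j<n. s j * (l j - a)\<^sup>2) = (\<Sum>j<n. s j * (l j - L)\<^sup>2) + 2 * (L - a) * (\<Sum>j<n. s j * (l j - L)) + (L - a)\<^sup>2 * Stot n s"
  proof -
    have "(\<Sum>j<n. s j * (l j - a)\<^sup>2) = (\<Sum>j<n. s j * (l j - L)\<^sup>2 + 2 * (L - a) * (s j * (l j - L)) + (L - a)\<^sup>2 * s j)"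
      by (intro sum.cong refl) (simp add: power2_eq_square algebra_simps)
    also have "\<dots> = (\<Sum>j<n. s j * (l j - L)\<^sup>2) + 2 * (L - a) * (\<Sum>j<n. s j * (l j - L)) + (L - a)\<^sup>2 * Stot n s"
      unfolding Stot_def by (simp add: sum.distrib sum_distrib_left)
    finally show ?thesis .
  qed
  then have "Psi0 n s m w \<le> (\<Sum>j<n. s j * (l j - a)\<^sup>2)" using psi z Spos by simp
  also have "\<dots> \<le> (\<Sum>j<n. sm * (l j - a)\<^sup>2)" using ssm by (intro sum_mono mult_right_mono) auto
  finally show ?thesis unfolding l_def by (simp add: sum_distrib_left)
qed


lemma mp_facts:
  assumes sj: "s j \<ge> 1" and sk: "s k \<ge> 1" and sm: "smax n s \<ge> 1"
    and degj: "deg n E j \<ge> 1"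
  shows "0 \<le> move_prob n E s w j k \<and> move_prob n E s w j k \<le> 1"
    and "real (w j) * move_prob n E s w j k / real (deg n E j) =
      (if real (w j) / s j - real (w k) / s k > 1 / s k
       then (real (w j) / s j - real (w k) / s k) / (4 * smax n s * (1 / s j + 1 / s k) * real (max (deg n E j) (deg n E k)))
       else 0)"
proof -
  define x where "x = real (w j) / s j - real (w k) / s k"
  define c where "c = 1 / s j + 1 / s k"
  define d where "d = real (max (deg n E j) (deg n E k))"
  define \<alpha> where "\<alpha> = 4 * smax n s"
  have cpos: "c > 0" and cj: "c \<ge> 1 / s j" unfolding c_def using sj sk by (auto simp: add_pos_pos)
  have apos: "\<alpha> \<ge> 4" unfolding \<alpha>_def using sm by simp
  have dj: "real (deg n E j) \<le> d" "real (deg n E j) \<ge> 1" unfolding d_def using degj by auto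
  then have dpos: "d > 0" by simp
  have mp: "move_prob n E s w j k = (if x > 1 / s k then real (deg n E j) / d * x / (\<alpha> * c * real (w j)) else 0)"
    unfolding move_prob_def x_def c_def d_def \<alpha>_def load_def Let_def by simp
  have main: "0 \<le> move_prob n E s w j k \<and> move_prob n E s w j k \<le> 1 \<and> real (w j) * move_prob n E s w j k / real (deg n E j) =
      (if x > 1 / s k then x / (\<alpha> * c * d) else 0)"
  proof (cases "x > 1 / s k")
    case False then show ?thesis unfolding mp by simp
  next
    case True
    have xpos: "x > 0" using True sk by (smt (verit) divide_pos_pos)
    have "real (w j) / s j > 0" using xpos sk unfolding x_def by (smt (verit) divide_nonneg_pos of_nat_0_le_iff)
    then have wpos: "real (w j) > 0" using sj by (simp add: zero_less_divide_iff)
    have xle: "x \<le> real (w j) / s j" unfolding x_def using sk by simp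
    also have "\<dots> = (1 / s j) * real (w j)" by simp
    also have "\<dots> \<le> \<alpha> * c * real (w j)"
    proof -
      have "c \<le> \<alpha> * c" using apos cpos by simp
      then have "1 / s j \<le> \<alpha> * c" using cj by linarith
      then show ?thesis using wpos by (intro mult_right_mono) auto
    qed
    finally have r1: "x / (\<alpha> * c * real (w j)) \<le> 1" using apos cpos wpos by (simp add: divide_le_eq)
    have r2: "real (deg n E j) / d \<le> 1" using dj dpos by simp
    have q: "real (deg n E j) / d * x / (\<alpha> * c * real (w j)) = (real (deg n E j) / d) * (x / (\<alpha> * c * real (w j)))" by simp
    have "(real (deg n E j) / d) * (x / (\<alpha> * c * real (w j))) \<le> 1 * 1"
      using r1 r2 xpos apos cpos wpos dpos dj by (intro mult_mono) auto
    moreover have "0 \<le> (real (deg n E j) / d) * (x / (\<alpha> * c * real (w j)))"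
      using xpos apos cpos wpos dpos dj by simp
    moreover have "real (w j) * (real (deg n E j) / d * x / (\<alpha> * c * real (w j))) / real (deg n E j) = x / (\<alpha> * c * d)"
      using wpos dj dpos apos cpos by (simp add: field_simps)
    ultimately show ?thesis unfolding mp q using True by simp
  qed
  from main show "0 \<le> move_prob n E s w j k \<and> move_prob n E s w j k \<le> 1" by auto
  from main show "real (w j) * move_prob n E s w j k / real (deg n E j) =
      (if real (w j) / s j - real (w k) / s k > 1 / s k
       then (real (w j) / s j - real (w k) / s k) / (4 * smax n s * (1 / s j + 1 / s k) * real (max (deg n E j) (deg n E k)))
       else 0)"
    unfolding x_def c_def d_def \<alpha>_def by auto
qed


theorem lemma13:
  fixes n m :: nat and E :: "nat \<Rightarrow> nat \<Rightarrow> bool" and s :: "nat \<Rightarrow> real"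
    and w :: "nat \<Rightarrow> nat"
  assumes n2: "n \<ge> 2"
    and sym: "\<And>i j. i < n \<Longrightarrow> j < n \<Longrightarrow> E i j \<Longrightarrow> E j i"
    and irrefl: "\<And>i. i < n \<Longrightarrow> \<not> E i i"
    and speeds: "\<And>i. i < n \<Longrightarrow> s i \<ge> 1"
    and minspeed: "\<exists>i<n. s i = 1"
    and tasks: "(\<Sum>i<n. w i) = m"
  shows "measure_pmf.expectation (round_step n E s w) (\<lambda>w'. Psi0 n s m w - Psi0 n s m w')
           \<ge> lambda2 n E / (16 * real (max_deg n E)) * (1 / (smax n s)\<^sup>2) * Psi0 n s m w
             - real n / (4 * smax n s)"
proof -
  have spos: "\<And>i. i < n \<Longrightarrow> s i > 0" using speeds by (smt (verit))
  define sm where "sm = smax n s"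
  have ssm: "\<And>i. i < n \<Longrightarrow> s i \<le> sm" unfolding sm_def smax_def by (intro Max_ge) auto
  have sm1: "sm \<ge> 1" using ssm[of 0] speeds[of 0] n2 by simp
  define D where "D = max_deg n E"
  have degD: "\<And>i. i < n \<Longrightarrow> deg n E i \<le> D" unfolding D_def max_deg_def by (intro Max_ge) auto
  have Spos: "Stot n s > 0" unfolding Stot_def using spos n2 by (intro sum_pos) (auto simp: lessThan_empty_iff)
  have degpos: "\<And>j k. j < n \<Longrightarrow> k < n \<Longrightarrow> E j k \<Longrightarrow> deg n E j \<ge> 1"
  proof -
    fix j k assume "j < n" "k < n" "E j k"
    then have "k \<in> nbrs n E j" unfolding nbrs_def by simp
    then show "deg n E j \<ge> 1" unfolding deg_def using nbrs_fin[of n E j]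
      by (metis One_nat_def Suc_leI card_gt_0_iff empty_iff)
  qed
  define l where "l j = real (w j) / s j" for j
  define q where "q j k = move_prob n E s w j k" for j k
  define \<phi> where "\<phi> j k = (if E j k then real (w j) * q j k / real (deg n E j) else 0)" for j k
  define dd where "dd j k = real (max (deg n E j) (deg n E k))" for j k
  have q01: "0 \<le> q j k \<and> q j k \<le> 1" if "j < n" "k \<in> nbrs n E j" for j k
  proof -
    have k: "k < n" "E j k" using that by (auto simp: nbrs_def)
    show ?thesis unfolding q_def
      by (rule mp_facts(1)) (use speeds sm1 degpos that k in \<open>auto simp: sm_def\<close>)
  qed
  have phiform: "\<phi> j k = (if l j - l k > 1 / s k then (l j - l k) / (4 * sm * (1 / s j + 1 / s k) * dd j k) else 0)"
    if jk: "j < n" "k < n" "E j k" for j k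
  proof -
    have "real (w j) * q j k / real (deg n E j) = (if l j - l k > 1 / s k then (l j - l k) / (4 * sm * (1 / s j + 1 / s k) * dd j k) else 0)"
      unfolding q_def l_def dd_def sm_def
      by (rule mp_facts(2)) (use speeds sm1 degpos jk in \<open>auto simp: sm_def\<close>)
    then show ?thesis unfolding \<phi>_def using jk by simp
  qed
  have phi0: "\<And>j k. j < n \<Longrightarrow> k < n \<Longrightarrow> \<phi> j k \<ge> 0"
    unfolding \<phi>_def using q01 by (auto simp: nbrs_def)
  have phiE: "\<And>j k. j < n \<Longrightarrow> k < n \<Longrightarrow> \<not> E j k \<Longrightarrow> \<phi> j k = 0" unfolding \<phi>_def by simp
  define P where "P a j = pmf (task_step n E s w a) j" for a j
  define c where "c j = real m * s j / Stot n s" for j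
  define \<mu> where "\<mu> j = (\<Sum>a<n. real (w a) * P a j)" for j
  define V where "V j = (\<Sum>a<n. real (w a) * (P a j * (1 - P a j)))" for j
  have expect: "measure_pmf.expectation (round_step n E s w) (\<lambda>w'. Psi0 n s m w - Psi0 n s m w')
     = Psi0 n s m w - (\<Sum>j<n. ((\<mu> j - c j)\<^sup>2 + V j) / s j)"
  proof -
    let ?S = "sample_all (task_step n E s w) (task_origins n w)"
    have fin: "\<And>a. a \<in> set (task_origins n w) \<Longrightarrow> finite (set_pmf (task_step n E s w a))"
      by (rule task_step_fin)
    have fs: "finite (set_pmf ?S)" by (rule sample_all_fin) (rule task_step_fin)
    have "measure_pmf.expectation (round_step n E s w) (\<lambda>w'. Psi0 n s m w - Psi0 n s m w')
       = measure_pmf.expectation ?S (\<lambda>ds. Psi0 n s m w - Psi0 n s m (\<lambda>j. count_list ds j))"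
      unfolding round_step_def by simp
    also have "\<dots> = Psi0 n s m w - measure_pmf.expectation ?S (\<lambda>ds. Psi0 n s m (\<lambda>j. count_list ds j))"
      by (subst Bochner_Integration.integral_diff) (auto simp: integrable_measure_pmf_finite fs)
    also have "measure_pmf.expectation ?S (\<lambda>ds. Psi0 n s m (\<lambda>j. count_list ds j))
       = (\<Sum>j<n. measure_pmf.expectation ?S (\<lambda>ds. (real (count_list ds j) - c j)\<^sup>2 / s j))"
      unfolding Psi0_def c_def by (rule exp_sum_fin[OF fs])
    also have "\<dots> = (\<Sum>j<n. ((\<mu> j - c j)\<^sup>2 + V j) / s j)"
      unfolding \<mu>_def V_def P_def
      by (intro sum.cong refl) (simp only: exp_sq_dev[OF fin] sum_list_task_origins)
    finally show ?thesis .
  qed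
  have ni: "a \<notin> nbrs n E a" if "a < n" for a using irrefl that by (simp add: nbrs_def)
  have Pne: "real (w a) * P a j = \<phi> a j" if aj: "a < n" "j < n" "j \<noteq> a" for a j
  proof -
    have "P a j = (if j \<in> nbrs n E a then q a j / real (deg n E a) else 0)"
      unfolding P_def q_def
      by (rule pmf_task_step(1)) (use q01[OF aj(1)] ni[OF aj(1)] aj in \<open>auto simp: q_def\<close>)
    then show ?thesis unfolding \<phi>_def using aj by (simp add: nbrs_def)
  qed
  have Peq: "real (w a) * P a a = real (w a) - (\<Sum>k<n. \<phi> a k)" if a: "a < n" for a
  proof -
    have "P a a = 1 - (\<Sum>k\<in>nbrs n E a. q a k) / real (deg n E a)"
      unfolding P_def q_def
      by (rule pmf_task_step(2)) (use q01[OF a] ni[OF a] in \<open>auto simp: q_def\<close>)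
    then have "real (w a) * P a a = real (w a) - (\<Sum>k\<in>nbrs n E a. real (w a) * q a k / real (deg n E a))"
      by (simp add: right_diff_distrib sum_divide_distrib[symmetric] sum_distrib_left[symmetric])
    also have "(\<Sum>k\<in>nbrs n E a. real (w a) * q a k / real (deg n E a)) = (\<Sum>k<n. \<phi> a k)"
      unfolding sum_nbrs \<phi>_def ..
    finally show ?thesis .
  qed
  have Pb: "0 \<le> P a j" "P a j \<le> 1" for a j unfolding P_def by (auto simp: pmf_le_1)
  have mu: "\<mu> j = real (w j) - (\<Sum>k<n. \<phi> j k) + (\<Sum>k<n. \<phi> k j)" if j: "j < n" for j
  proof -
    have "\<mu> j = (\<Sum>a<n. if a = j then real (w j) - (\<Sum>k<n. \<phi> j k) else \<phi> a j)"
      unfolding \<mu>_def using Peq Pne j by (intro sum.cong refl) auto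
    also have "\<dots> = real (w j) - (\<Sum>k<n. \<phi> j k) + (\<Sum>a<n. \<phi> a j) - \<phi> j j"
      by (rule sum_if_eq) (use j in auto)
    also have "\<phi> j j = 0" unfolding \<phi>_def using irrefl j by simp
    finally show ?thesis by simp
  qed
  have Vb: "V j \<le> (\<Sum>k<n. \<phi> j k + \<phi> k j)" if j: "j < n" for j
  proof -
    have "V j \<le> (\<Sum>a<n. if a = j then (\<Sum>k<n. \<phi> j k) else \<phi> a j)"
      unfolding V_def
    proof (intro sum_mono)
      fix a assume "a \<in> {..<n}"
      then have a: "a < n" by simp
      show "real (w a) * (P a j * (1 - P a j)) \<le> (if a = j then (\<Sum>k<n. \<phi> j k) else \<phi> a j)"
      proof (cases "a = j")
        case True
        have "real (w a) * (P a j * (1 - P a j)) \<le> real (w a) * (1 - P a j)"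
          using Pb[of a j] by (intro mult_left_mono) (auto intro: mult_left_le_one_le)
        also have "\<dots> = (\<Sum>k<n. \<phi> j k)" using Peq[OF a] True by (simp add: algebra_simps)
        finally show ?thesis using True by simp
      next
        case False
        have "real (w a) * (P a j * (1 - P a j)) \<le> real (w a) * P a j"
          using Pb[of a j] by (intro mult_left_mono) (auto intro: mult_right_le_one_le)
        also have "\<dots> = \<phi> a j" using Pne[OF a j] False by simp
        finally show ?thesis using False by simp
      qed
    qed
    also have "\<dots> = (\<Sum>k<n. \<phi> j k) + (\<Sum>a<n. \<phi> a j) - \<phi> j j"
      by (rule sum_if_eq) (use j in auto)
    also have "\<phi> j j = 0" unfolding \<phi>_def using irrefl j by simp
    finally show ?thesis by (simp add: sum.distrib)
  qed
  have db: "Psi0 n s m w - (\<Sum>j<n. ((\<mu> j - c j)\<^sup>2 + V j) / s j)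
     \<ge> (\<Sum>j<n. \<Sum>k<n. \<phi> j k * (2 * (l j - l k)
            - \<phi> j k * (real (deg n E j) / s j + real (deg n E k) / s k) - (1 / s j + 1 / s k)))"
    unfolding c_def l_def
    by (rule drop_bound[where E=E and \<phi>=\<phi>, OF sym spos Spos tasks phi0 phiE mu Vb])
  define T where "T j k = \<phi> j k * (2 * (l j - l k)
            - \<phi> j k * (real (deg n E j) / s j + real (deg n E k) / s k) - (1 / s j + 1 / s k))" for j k
  define Q where "Q = (\<Sum>j<n. \<Sum>k<n. if E j k then (l j - l k)\<^sup>2 else 0)"
  define K where "K = 16 * real D * sm"
  have TE: "(\<Sum>j<n. \<Sum>k<n. T j k) = (\<Sum>j<n. \<Sum>k<n. if E j k then T j k else 0)"
    by (intro sum.cong refl) (auto simp: T_def phiE)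
  have Tb: "(\<Sum>j<n. \<Sum>k<n. if E j k then T j k else 0)
     \<ge> (\<Sum>j<n. \<Sum>k<n. if E j k then (max 0 (l j - l k))\<^sup>2 / K - 1 / (10 * sm * dd j k) else 0)"
  proof (intro sum_mono)
    fix j k assume "j \<in> {..<n}" "k \<in> {..<n}"
    then have jk: "j < n" "k < n" by auto
    show "(if E j k then (max 0 (l j - l k))\<^sup>2 / K - 1 / (10 * sm * dd j k) else 0) \<le> (if E j k then T j k else 0)"
    proof (cases "E j k")
      case True
      have d1: "dd j k \<ge> 1" unfolding dd_def using degpos[OF jk True] by simp
      have dD: "dd j k \<le> real D" unfolding dd_def using degD jk by simp
      have "T j k \<ge> (max 0 (l j - l k))\<^sup>2 / (16 * real D * sm) - 1 / (10 * sm * dd j k)"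
        unfolding T_def phiform[OF jk True]
        by (rule pair_bound) (use speeds jk sm1 d1 dD in \<open>auto simp: dd_def\<close>)
      then show ?thesis using True unfolding K_def by simp
    qed simp
  qed
  have sum2_div: "(\<Sum>j<n. \<Sum>k<n. if E j k then f j k / Z else 0) = (\<Sum>j<n. \<Sum>k<n. if E j k then f j k else 0) / Z"
    for f :: "nat \<Rightarrow> nat \<Rightarrow> real" and Z
    unfolding sum_divide_distrib by (intro sum.cong refl) simp
  have A: "(\<Sum>j<n. \<Sum>k<n. if E j k then (max 0 (l j - l k))\<^sup>2 / K else 0) = Q / 2 / K"
  proof -
    have h: "(\<Sum>j<n. \<Sum>k<n. if E j k then (max 0 (l j - l k))\<^sup>2 else 0) = Q / 2"
      unfolding Q_def by (rule half_sq[where n=n and E=E and x=l, OF sym])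
    show ?thesis unfolding sum2_div h ..
  qed
  have B: "(\<Sum>j<n. \<Sum>k<n. if E j k then 1 / (10 * sm * dd j k) else 0) \<le> real n / (10 * sm)"
  proof -
    have "(\<Sum>j<n. \<Sum>k<n. if E j k then 1 / (10 * sm * dd j k) else 0)
        = (\<Sum>j<n. \<Sum>k<n. if E j k then 1 / dd j k else 0) / (10 * sm)"
      unfolding sum2_div[symmetric] by (intro sum.cong refl) simp
    also have "\<dots> \<le> real n / (10 * sm)"
      using sum_inv_deg[where n=n and E=E, OF sym] sm1 unfolding dd_def by (intro divide_right_mono) auto
    finally show ?thesis .
  qed
  have split: "(\<Sum>j<n. \<Sum>k<n. if E j k then (max 0 (l j - l k))\<^sup>2 / K - 1 / (10 * sm * dd j k) else 0)
     = (\<Sum>j<n. \<Sum>k<n. if E j k then (max 0 (l j - l k))\<^sup>2 / K else 0)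
       - (\<Sum>j<n. \<Sum>k<n. if E j k then 1 / (10 * sm * dd j k) else 0)"
    by (simp add: sum_if_diff sum_subtractf)
  have main: "measure_pmf.expectation (round_step n E s w) (\<lambda>w'. Psi0 n s m w - Psi0 n s m w')
     \<ge> Q / 2 / K - real n / (10 * sm)"
    using expect db TE Tb A B split unfolding T_def by linarith
  have Q0: "Q \<ge> 0" unfolding Q_def by (intro sum_nonneg) auto
  have K0: "K \<ge> 0" unfolding K_def using sm1 by simp
  have psi0: "Psi0 n s m w \<ge> 0" unfolding Psi0_def
  proof (intro sum_nonneg)
    fix x assume "x \<in> {..<n}"
    then have "s x > 0" using spos by simp
    then show "0 \<le> (real (w x) - real m * s x / Stot n s)\<^sup>2 / s x" by simp
  qed
  have nb: "real n / (10 * sm) \<le> real n / (4 * sm)" using sm1 by (intro divide_left_mono) auto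
  show ?thesis
  proof (cases "lambda2 n E > 0 \<and> D > 0")
    case True
    define avg where "avg = (\<Sum>i<n. l i) / real n"
    define Y where "Y = (\<Sum>j<n. (l j - avg)\<^sup>2)"
    have QY: "Q \<ge> 2 * lambda2 n E * Y"
      unfolding Q_def Y_def avg_def using spectral_final[where n=n and E=E and x=l, OF n2 sym irrefl] True by simp
    have PY: "Psi0 n s m w \<le> sm * Y"
      unfolding Y_def l_def by (rule psi_bound[OF spos ssm Spos tasks])
    have Kpos: "K > 0" unfolding K_def using True sm1 by simp
    have "lambda2 n E / (16 * real (max_deg n E)) * (1 / (smax n s)\<^sup>2) * Psi0 n s m w
        = lambda2 n E / (K * sm) * Psi0 n s m w"
      unfolding K_def D_def sm_def by (simp add: power2_eq_square)
    also have "\<dots> \<le> lambda2 n E / (K * sm) * (sm * Y)"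
      using PY True Kpos sm1 by (intro mult_left_mono) auto
    also have "\<dots> = lambda2 n E * Y / K" using sm1 by (simp add: field_simps)
    also have "\<dots> \<le> Q / 2 / K" using QY Kpos by (simp add: field_simps)
    finally show ?thesis using main nb unfolding sm_def by linarith
  next
    case False
    have "lambda2 n E / (16 * real (max_deg n E)) * (1 / (smax n s)\<^sup>2) * Psi0 n s m w \<le> 0"
    proof (cases "D = 0")
      case True then show ?thesis unfolding D_def by simp
    next
      case False
      then have "lambda2 n E \<le> 0" using \<open>\<not> (lambda2 n E > 0 \<and> D > 0)\<close> by auto
      then have "lambda2 n E / (16 * real (max_deg n E)) \<le> 0" by (simp add: divide_nonpos_nonneg)
      moreover have "(1 / (smax n s)\<^sup>2) * Psi0 n s m w \<ge> 0" using psi0 by simp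
      ultimately show ?thesis by (metis mult.assoc mult_nonpos_nonneg)
    qed
    moreover have "Q / 2 / K \<ge> 0" using Q0 K0 by simp
    ultimately show ?thesis using main nb unfolding sm_def by linarith
  qed
qed

end
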